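(* Let $T$ be a bounded, linear, bijective operator on $L^2(G,\mathbb{C}^{s\times r})$ that is adjointable with respect to the matrix-valued inner product, and let $\{E_k\}_{k\in\mathbb{N}}$ be a matrix-valued orthonormal basis for $L^2(G,\mathbb{C}^{s\times r})$. If $T$ is positive, then $\{TE_k\}_{k\in\mathbb{N}}$ is a matrix-valued Riesz basis for $L^2(G,\mathbb{C}^{s\times r})$ if and only if $\{T^{1/2}E_k\}_{k\in\mathbb{N}}$ is a matrix-valued Riesz basis for $L^2(G,\mathbb{C}^{s\times r})$.
   Context: $G$ is a locally compact abelian group that is metrizable and $\sigma$-compact, with Haar measure $\mu_G$; $s,r\in\mathbb{N}$. $L^2(G,\mathbb{C}^{s\times r})$ is the space of $s\times r$ matrices $\mathbf{f}=[f_{ij}]$ with all entries in $L^2(G)$. The matrix-valued inner product is $\langle \mathbf{f},\mathbf{g}\rangle=\int_G \mathbf{f}(x)\mathbf{g}^*(x)\,d\mu_G\in M_s(\mathbb{C})$ (entrywise integral). $L^2(G,\mathbb{C}^{s\times r})$ is a Hilbert space with inner product $\langle \mathbf{f},\mathbf{g}\rangle_{L^2}=\mathrm{tr}\langle \mathbf{f},\mathbf{g}\rangle$ and Frobenius norm $\|\mathbf{f}\|=(\sum_{i,j}\int_G|f_{ij}|^2d\mu_G)^{1/2}$; $U^*$ denotes the Hilbert-adjoint with respect to this inner product. $U$ is adjointable with respect to the matrix-valued inner product if $\langle U\mathbf{f},\mathbf{g}\rangle=\langle\mathbf{f},U^*\mathbf{g}\rangle$ for all $\mathbf{f},\mathbf{g}$.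 $T$ is positive if $T^*=T$ and $\mathrm{tr}\langle T\mathbf{f},\mathbf{f}\rangle\ge0$ for all $\mathbf{f}$; $T^{1/2}$ is the unique bounded positive operator $W$ with $W^2=T$. A matrix-valued orthonormal basis is a sequence $\{E_k\}_{k\in\mathbb{N}}$ with $\langle E_k,E_j\rangle=\mathbf{I}_{s\times s}$ if $k=j$ and $\mathbf{O}_{s\times s}$ otherwise, such that $\mathbf{f}=\sum_k\langle\mathbf{f},E_k\rangle E_k$ in Frobenius norm for all $\mathbf{f}$. A matrix-valued Riesz basis is a family $\{UE_k\}_{k\in\mathbb{N}}$ with $\{E_k\}$ a matrix-valued orthonormal basis and $U$ bounded, linear, bijective and adjointable with respect to the matrix-valued inner product. *)

theory Defs
  imports "HOL-Analysis.Analysis"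
begin

definition lca_metr_sigma_compact :: "'g::{metric_space, topological_ab_group_add} itself \<Rightarrow> bool" where
  "lca_metr_sigma_compact _ \<longleftrightarrow>
     locally compact (UNIV :: 'g set) \<and>
     (\<exists>K :: nat \<Rightarrow> 'g set. (\<forall>n. compact (K n)) \<and> (\<Union>n. K n) = UNIV)"

text \<open>Haar measure: a nonzero translation-invariant Borel measure, finite on compact sets and
positive on nonempty open sets (regularity is automatic on metrizable sigma-compact
locally compact spaces).\<close>

definition haar_measure :: "'g::{metric_space, topological_ab_group_add} measure \<Rightarrow> bool" where
  "haar_measure M \<longleftrightarrow>
     sets M = sets borel \<and> space M = UNIV \<and>
     (\<forall>a A. A \<in> sets borel \<longrightarrow> emeasure M ((+) a ` A) = emeasure M A) \<and>
     (\<forall>K. compact K \<longrightarrow> emeasure M K < \<infinity>) \<and>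
     (\<forall>U. open U \<and> U \<noteq> {} \<longrightarrow> emeasure M U > 0)"

text \<open>An s x r complex matrix is an element of complex^'r^'s (rows indexed by 's,
columns by 'r); its norm is the Frobenius norm.\<close>

definition adjm :: "complex^'r^'s \<Rightarrow> complex^'s^'r" where
  "adjm A = (\<chi> i j. cnj (A $ j $ i))"

definition cscale :: "complex \<Rightarrow> complex^'r^'s \<Rightarrow> complex^'r^'s" where
  "cscale c A = (\<chi> i j. c * A $ i $ j)"

definition mtrace :: "complex^'s^'s \<Rightarrow> complex" where
  "mtrace A = (\<Sum>i\<in>UNIV. A $ i $ i)"

definition L2m :: "'g measure \<Rightarrow> ('g \<Rightarrow> complex^'r^'s::finite) set" where
  "L2m M = {f. f \<in> borel_measurable M \<and> integrable M (\<lambda>x. (norm (f x))\<^sup>2)}"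

text \<open>Elements of L^2 are functions modulo equality almost everywhere.\<close>

definition aeq :: "'g measure \<Rightarrow> ('g \<Rightarrow> 'a) \<Rightarrow> ('g \<Rightarrow> 'a) \<Rightarrow> bool" where
  "aeq M f g \<longleftrightarrow> (AE x in M. f x = g x)"

definition l2norm :: "'g measure \<Rightarrow> ('g \<Rightarrow> complex^'r^'s) \<Rightarrow> real" where
  "l2norm M f = sqrt (\<integral>x. (norm (f x))\<^sup>2 \<partial>M)"

definition mip :: "'g measure \<Rightarrow> ('g \<Rightarrow> complex^'r^'s) \<Rightarrow> ('g \<Rightarrow> complex^'r^'s)
                    \<Rightarrow> complex^'s^'s" where
  "mip M f g = (\<integral>x. f x ** adjm (g x) \<partial>M)"

definition sip :: "'g measure \<Rightarrow> ('g \<Rightarrow> complex^'r^'s) \<Rightarrow> ('g \<Rightarrow> complex^'r^'s) \<Rightarrow> complex" where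
  "sip M f g = mtrace (mip M f g)"

definition bounded_linear_op ::
  "'g measure \<Rightarrow> (('g \<Rightarrow> complex^'r^'s) \<Rightarrow> ('g \<Rightarrow> complex^'r^'s)) \<Rightarrow> bool" where
  "bounded_linear_op M U \<longleftrightarrow>
     (\<forall>f\<in>L2m M. U f \<in> L2m M) \<and>
     (\<forall>f\<in>L2m M. \<forall>g\<in>L2m M. aeq M f g \<longrightarrow> aeq M (U f) (U g)) \<and>
     (\<forall>f\<in>L2m M. \<forall>g\<in>L2m M. \<forall>a b :: complex.
        aeq M (U (\<lambda>x. cscale a (f x) + cscale b (g x)))
              (\<lambda>x. cscale a (U f x) + cscale b (U g x))) \<and>
     (\<exists>C. \<forall>f\<in>L2m M. l2norm M (U f) \<le> C * l2norm M f)"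

definition bij_op ::
  "'g measure \<Rightarrow> (('g \<Rightarrow> complex^'r^'s) \<Rightarrow> ('g \<Rightarrow> complex^'r^'s)) \<Rightarrow> bool" where
  "bij_op M U \<longleftrightarrow>
     (\<forall>f\<in>L2m M. \<forall>g\<in>L2m M. aeq M (U f) (U g) \<longrightarrow> aeq M f g) \<and>
     (\<forall>g\<in>L2m M. \<exists>f\<in>L2m M. aeq M (U f) g)"

text \<open>Adjointable with respect to the matrix-valued inner product: there is a bounded
operator V (necessarily the Hilbert adjoint U^*) with <Uf,g> = <f,Vg> as matrices.\<close>

definition adjointable_op ::
  "'g measure \<Rightarrow> (('g \<Rightarrow> complex^'r^'s) \<Rightarrow> ('g \<Rightarrow> complex^'r^'s)) \<Rightarrow> bool" where
  "adjointable_op M U \<longleftrightarrow>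
     (\<exists>V. bounded_linear_op M V \<and>
          (\<forall>f\<in>L2m M. \<forall>g\<in>L2m M. mip M (U f) g = mip M f (V g)))"

definition positive_op ::
  "'g measure \<Rightarrow> (('g \<Rightarrow> complex^'r^'s) \<Rightarrow> ('g \<Rightarrow> complex^'r^'s)) \<Rightarrow> bool" where
  "positive_op M T \<longleftrightarrow>
     bounded_linear_op M T \<and>
     (\<forall>f\<in>L2m M. \<forall>g\<in>L2m M. sip M (T f) g = sip M f (T g)) \<and>
     (\<forall>f\<in>L2m M. Im (sip M (T f) f) = 0 \<and> 0 \<le> Re (sip M (T f) f))"

text \<open>The square root T^{1/2}: the (unique up to a.e.-equality) bounded positive W with
W^2 = T.\<close>

definition op_sqrt ::
  "'g measure \<Rightarrow> (('g \<Rightarrow> complex^'r^'s) \<Rightarrow> ('g \<Rightarrow> complex^'r^'s))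
     \<Rightarrow> (('g \<Rightarrow> complex^'r^'s) \<Rightarrow> ('g \<Rightarrow> complex^'r^'s))" where
  "op_sqrt M T = (SOME W. positive_op M W \<and> (\<forall>f\<in>L2m M. aeq M (W (W f)) (T f)))"

definition matrix_onb ::
  "'g measure \<Rightarrow> (nat \<Rightarrow> ('g \<Rightarrow> complex^'r^'s)) \<Rightarrow> bool" where
  "matrix_onb M E \<longleftrightarrow>
     (\<forall>k. E k \<in> L2m M) \<and>
     (\<forall>k j. mip M (E k) (E j) = (if k = j then mat 1 else 0)) \<and>
     (\<forall>f\<in>L2m M. (\<lambda>n. l2norm M (\<lambda>x. f x - (\<Sum>k<n. mip M f (E k) ** E k x)))
                    \<longlonglongrightarrow> 0)"

definition matrix_riesz_basis ::
  "'g measure \<Rightarrow> (nat \<Rightarrow> ('g \<Rightarrow> complex^'r^'s)) \<Rightarrow> bool" where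
  "matrix_riesz_basis M F \<longleftrightarrow>
     (\<exists>E U. matrix_onb M E \<and> bounded_linear_op M U \<and> bij_op M U \<and> adjointable_op M U \<and>
            (\<forall>k. aeq M (F k) (U (E k))))"

end

theory Submission
  imports Defs "HOL-Computational_Algebra.Formal_Power_Series"
begin

definition pip :: "complex^'r^'s \<Rightarrow> complex^'r^'s \<Rightarrow> complex" where
  "pip A B = (\<Sum>i\<in>UNIV. \<Sum>j\<in>UNIV. A$i$j * cnj (B$i$j))"

lemma mtrace_mult_adjm: "mtrace (A ** adjm B) = pip A B"
  by (simp add: mtrace_def pip_def matrix_matrix_mult_def adjm_def)

lemma norm_sq_entries: "(norm (A::complex^'r^'s))\<^sup>2 = (\<Sum>i\<in>UNIV. \<Sum>j\<in>UNIV. (cmod (A$i$j))\<^sup>2)"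
  by (simp add: norm_vec_def L2_set_def sum_nonneg)

lemma pip_self: "pip A A = of_real ((norm A)\<^sup>2)"
  unfolding norm_sq_entries pip_def
  by (simp add: of_real_sum complex_norm_square del: of_real_power)

lemma Re_pip: "Re (pip A B) = inner A B"
  by (simp add: pip_def inner_vec_def inner_complex_def Re_sum)

lemma pip_commute: "pip B A = cnj (pip A B)"
  by (simp add: pip_def cnj_sum mult.commute)

lemma pip_add_left: "pip (A + B) C = pip A C + pip B C"
  by (simp add: pip_def distrib_right sum.distrib)

lemma pip_diff_left: "pip (A - B) C = pip A C - pip B C"
  by (simp add: pip_def left_diff_distrib sum_subtractf)

lemma pip_add_right: "pip A (B + C) = pip A B + pip A C"
  by (simp add: pip_def distrib_left sum.distrib)

lemma pip_diff_right: "pip A (B - C) = pip A B - pip A C"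
  by (simp add: pip_def right_diff_distrib sum_subtractf)

lemma pip_cscale_left: "pip (cscale c A) B = c * pip A B"
  by (simp add: pip_def cscale_def sum_distrib_left mult.assoc)

lemma pip_cscale_right: "pip A (cscale c B) = cnj c * pip A B"
  by (simp add: pip_def cscale_def sum_distrib_left mult.assoc mult.left_commute)

lemma sc_comp: "(r *\<^sub>R (A::complex^'r^'s)) $ i $ j = complex_of_real r * A $ i $ j"
  using scaleR_conv_of_real[of r "A$i$j"] by simp

lemma sc_comp1: "r *\<^sub>R (z::complex) = complex_of_real r * z"
  by (simp add: scaleR_conv_of_real)

lemma pip_scaleR_left: "pip (r *\<^sub>R A) B = r *\<^sub>R pip A B"
  by (simp add: pip_def sc_comp sc_comp1 sum_distrib_left mult.assoc)

lemma pip_scaleR_right: "pip A (r *\<^sub>R B) = r *\<^sub>R pip A B"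
  by (simp add: pip_def sc_comp sc_comp1 sum_distrib_left mult.assoc mult.left_commute)

lemma pip_zero_left[simp]: "pip 0 B = 0" and pip_zero_right[simp]: "pip A 0 = 0"
  by (simp_all add: pip_def)

lemma cscale_of_real: "cscale (of_real r) A = r *\<^sub>R A"
  by (simp add: cscale_def vec_eq_iff sc_comp sc_comp1)

lemma cscale_add: "cscale c (A + B) = cscale c A + cscale c B"
  by (simp add: cscale_def vec_eq_iff distrib_left)

lemma cscale_diff: "cscale c (A - B) = cscale c A - cscale c B"
  by (simp add: cscale_def vec_eq_iff right_diff_distrib)

lemma cscale_add_left: "cscale (c + d) A = cscale c A + cscale d A"
  by (simp add: cscale_def vec_eq_iff distrib_right)

lemma cscale_one[simp]: "cscale 1 A = A"
  by (simp add: cscale_def vec_eq_iff)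

lemma cscale_zero[simp]: "cscale 0 A = 0"
  by (simp add: cscale_def vec_eq_iff)

lemma cscale_zero_right[simp]: "cscale c 0 = 0"
  by (simp add: cscale_def vec_eq_iff)

lemma cscale_minus_one: "cscale (-1) A = - A"
  by (simp add: cscale_def vec_eq_iff)

lemma cscale_cscale: "cscale c (cscale d A) = cscale (c * d) A"
  by (simp add: cscale_def vec_eq_iff mult.assoc)

lemma cscale_scaleR: "cscale c (r *\<^sub>R A) = r *\<^sub>R cscale c A"
  by (simp add: cscale_def vec_eq_iff sc_comp sc_comp1 mult.left_commute)

lemma cscale_sum: "cscale c (sum F I) = (\<Sum>i\<in>I. cscale c (F i))"
  by (induction I rule: infinite_finite_induct) (simp_all add: cscale_add)

lemma mult_cscale: "X ** cscale c A = cscale c (X ** A)"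
  by (simp add: cscale_def vec_eq_iff matrix_matrix_mult_def sum_distrib_left mult.left_commute)

lemma mult_scaleR: "(X::complex^'a^'b) ** (r *\<^sub>R A) = r *\<^sub>R (X ** A)"
  by (simp add: vec_eq_iff matrix_matrix_mult_def sc_comp sc_comp1 sum_distrib_left mult.left_commute)

lemma mult_diff: "(X::complex^'a^'b) ** (A - B) = X ** A - X ** B"
  by (simp add: vec_eq_iff matrix_matrix_mult_def right_diff_distrib sum_subtractf)

lemma mult_sum: "(X::complex^'a^'b) ** (sum F I) = (\<Sum>i\<in>I. X ** F i)"
  by (induction I rule: infinite_finite_induct) (simp_all add: matrix_add_ldistrib)

lemma norm_cscale: "norm (cscale c A) = cmod c * norm (A::complex^'r^'s)"
proof -
  have "(norm (cscale c A))\<^sup>2 = (cmod c * norm A)\<^sup>2"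
    by (simp add: norm_sq_entries power_mult_distrib sum_distrib_left cscale_def norm_mult)
  then show ?thesis
    by (simp add: power2_eq_iff_nonneg)
qed

lemma cnorm_pip: "cmod (pip A B) \<le> norm A * norm (B::complex^'r^'s)"
proof (cases "pip A B = 0")
  case True then show ?thesis by simp
next
  case False
  define u where "u = cnj (pip A B) / of_real (cmod (pip A B))"
  have cu: "cmod u = 1" using False by (simp add: u_def norm_divide)
  have "cnj (pip A B) * pip A B = of_real ((cmod (pip A B))^2)"
    using complex_norm_square[of "pip A B"] by (simp add: mult.commute)
  then have "u * pip A B = of_real (cmod (pip A B))"
    using False by (simp add: u_def power2_eq_square)
  then have "cmod (pip A B) = Re (pip (cscale u A) B)"
    by (simp add: pip_cscale_left)
  also have "\<dots> = inner (cscale u A) B" by (rule Re_pip)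
  also have "\<dots> \<le> norm (cscale u A) * norm B" by (rule norm_cauchy_schwarz)
  also have "\<dots> = norm A * norm B" by (simp add: norm_cscale cu)
  finally show ?thesis .
qed

lemma bilinear_pip: "bounded_bilinear (pip :: complex^'r^'s \<Rightarrow> _ \<Rightarrow> _)"
proof -
  have "bilinear (pip :: complex^'r^'s \<Rightarrow> _ \<Rightarrow> _)"
    unfolding bilinear_def
    by (auto intro!: linearI simp: pip_add_left pip_add_right pip_scaleR_left pip_scaleR_right)
  then show ?thesis by (simp add: bilinear_conv_bounded_bilinear)
qed

lemma adjm_add: "adjm (A + B) = adjm A + adjm B"
  by (simp add: adjm_def vec_eq_iff)

lemma adjm_scaleR: "adjm (r *\<^sub>R A) = r *\<^sub>R adjm A"
  by (simp add: adjm_def vec_eq_iff sc_comp sc_comp1)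

lemma mult_add_right: "((A::complex^'a^'b) + B) ** C = A ** C + B ** C"
  by (simp add: vec_eq_iff matrix_matrix_mult_def distrib_right sum.distrib)

lemma mult_scaleR_left: "(r *\<^sub>R (A::complex^'a^'b)) ** C = r *\<^sub>R (A ** C)"
  by (simp add: vec_eq_iff matrix_matrix_mult_def sc_comp sc_comp1 sum_distrib_left mult.assoc)

lemma bilinear_mm: "bounded_bilinear (\<lambda>(A::complex^'r^'s) (B::complex^'r^'s). A ** adjm B)"
proof -
  have "bilinear (\<lambda>(A::complex^'r^'s) (B::complex^'r^'s). A ** adjm B)"
    unfolding bilinear_def
    by (auto intro!: linearI simp: adjm_add adjm_scaleR matrix_add_ldistrib mult_add_right
        mult_scaleR mult_scaleR_left)
  then show ?thesis by (simp add: bilinear_conv_bounded_bilinear)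
qed

lemma blin_mtrace_mult: "bounded_linear (\<lambda>N::complex^'s^'s. mtrace (Y ** N))"
proof -
  have "linear (\<lambda>N::complex^'s^'s. mtrace (Y ** N))"
    by (auto intro!: linearI simp: matrix_add_ldistrib mult_scaleR mtrace_def sum.distrib sc_comp sc_comp1 sum_distrib_left)
  then show ?thesis by (simp add: linear_conv_bounded_linear)
qed

lemma blin_lmult: "bounded_linear (\<lambda>A::complex^'r^'s. (X::complex^'s^'s) ** A)"
proof -
  have "linear (\<lambda>A::complex^'r^'s. (X::complex^'s^'s) ** A)"
    by (auto intro!: linearI simp: matrix_add_ldistrib mult_scaleR)
  then show ?thesis by (simp add: linear_conv_bounded_linear)
qed

lemma blin_cscale: "bounded_linear (\<lambda>A::complex^'r^'s. cscale c A)"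
  by (rule bounded_linearI') (auto simp: cscale_add cscale_scaleR)

lemma L2mD: assumes "f \<in> L2m M"
  shows "f \<in> borel_measurable M" "integrable M (\<lambda>x. (norm (f x))\<^sup>2)"
  using assms by (auto simp: L2m_def)

lemma L2mI: "f \<in> borel_measurable M \<Longrightarrow> integrable M (\<lambda>x. (norm (f x))\<^sup>2) \<Longrightarrow> f \<in> L2m M"
  by (auto simp: L2m_def)

lemma meas_bilin:
  fixes prod :: "'a::{real_normed_vector,second_countable_topology} \<Rightarrow> 'b::{real_normed_vector,second_countable_topology} \<Rightarrow> 'c::real_normed_vector"
  assumes "bounded_bilinear prod" "f \<in> borel_measurable M" "g \<in> borel_measurable M"
  shows "(\<lambda>x. prod (f x) (g x)) \<in> borel_measurable M"
proof (rule borel_measurable_continuous_Pair[OF assms(2,3)])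
  show "continuous_on UNIV (\<lambda>x. prod (fst x) (snd x))"
    by (intro bounded_bilinear.continuous_on[OF assms(1)] continuous_intros)
qed

lemma meas_blin:
  fixes T :: "'a::real_normed_vector \<Rightarrow> 'b::real_normed_vector"
  assumes "bounded_linear T" "f \<in> borel_measurable M"
  shows "(\<lambda>x. T (f x)) \<in> borel_measurable M"
  by (rule borel_measurable_continuous_on[OF linear_continuous_on[OF assms(1)] assms(2)])

lemma L2m_int_prod:
  assumes f: "f \<in> L2m M" and g: "g \<in> L2m M"
  shows "integrable M (\<lambda>x. norm (f x) * norm (g x))"
proof (rule Bochner_Integration.integrable_bound[of _ "\<lambda>x. (norm (f x))\<^sup>2 + (norm (g x))\<^sup>2"])
  have [measurable]: "f \<in> borel_measurable M" "g \<in> borel_measurable M"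
    using f g by (auto dest: L2mD)
  show "integrable M (\<lambda>x. (norm (f x))\<^sup>2 + (norm (g x))\<^sup>2)"
    using f g by (auto dest: L2mD)
  show "(\<lambda>x. norm (f x) * norm (g x)) \<in> borel_measurable M" by measurable
  show "AE x in M. norm (norm (f x) * norm (g x)) \<le> norm ((norm (f x))\<^sup>2 + (norm (g x))\<^sup>2)"
  proof (intro AE_I2)
    fix x
    have "0 \<le> (norm (f x) - norm (g x))\<^sup>2" by simp
    then have "2 * (norm (f x) * norm (g x)) \<le> (norm (f x))\<^sup>2 + (norm (g x))\<^sup>2"
      by (simp add: power2_eq_square algebra_simps)
    moreover have "0 \<le> norm (f x) * norm (g x)" by simp
    ultimately have "norm (f x) * norm (g x) \<le> (norm (f x))\<^sup>2 + (norm (g x))\<^sup>2"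
      by linarith
    then show "norm (norm (f x) * norm (g x)) \<le> norm ((norm (f x))\<^sup>2 + (norm (g x))\<^sup>2)"
      by simp
  qed
qed

lemma L2m_add:
  assumes f: "f \<in> L2m M" and g: "g \<in> L2m M"
  shows "(\<lambda>x. f x + g x) \<in> L2m M"
proof (rule L2mI)
  have [measurable]: "f \<in> borel_measurable M" "g \<in> borel_measurable M"
    using f g by (auto dest: L2mD)
  show "(\<lambda>x. f x + g x) \<in> borel_measurable M" by measurable
  show "integrable M (\<lambda>x. (norm (f x + g x))\<^sup>2)"
  proof (rule Bochner_Integration.integrable_bound[of _ "\<lambda>x. 2 * (norm (f x))\<^sup>2 + 2 * (norm (g x))\<^sup>2"])
    show "integrable M (\<lambda>x. 2 * (norm (f x))\<^sup>2 + 2 * (norm (g x))\<^sup>2)"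
      using f g by (auto intro!: Bochner_Integration.integrable_add integrable_mult_right dest: L2mD)
    show "(\<lambda>x. (norm (f x + g x))\<^sup>2) \<in> borel_measurable M" by measurable
    show "AE x in M. norm ((norm (f x + g x))\<^sup>2) \<le> norm (2 * (norm (f x))\<^sup>2 + 2 * (norm (g x))\<^sup>2)"
    proof (intro AE_I2)
      fix x
      have t: "norm (f x + g x) \<le> norm (f x) + norm (g x)" by (rule norm_triangle_ineq)
      have "(norm (f x + g x))\<^sup>2 \<le> (norm (f x) + norm (g x))\<^sup>2"
        using t by (simp add: power_mono)
      also have "\<dots> \<le> 2 * (norm (f x))\<^sup>2 + 2 * (norm (g x))\<^sup>2"
        using sum_squares_bound[of "norm (f x)" "norm (g x)"]
        by (simp add: power2_eq_square algebra_simps)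
      finally show "norm ((norm (f x + g x))\<^sup>2) \<le> norm (2 * (norm (f x))\<^sup>2 + 2 * (norm (g x))\<^sup>2)"
        by simp
    qed
  qed
qed

lemma L2m_scaleR:
  assumes f: "f \<in> L2m M"
  shows "(\<lambda>x. r *\<^sub>R f x) \<in> L2m M"
proof (rule L2mI)
  have [measurable]: "f \<in> borel_measurable M" using f by (auto dest: L2mD)
  show "(\<lambda>x. r *\<^sub>R f x) \<in> borel_measurable M" by measurable
  have "integrable M (\<lambda>x. r\<^sup>2 * (norm (f x))\<^sup>2)" using f by (auto dest: L2mD)
  then show "integrable M (\<lambda>x. (norm (r *\<^sub>R f x))\<^sup>2)"
    by (simp add: power_mult_distrib)
qed

lemma L2m_uminus: "f \<in> L2m M \<Longrightarrow> (\<lambda>x. - f x) \<in> L2m M"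
  using L2m_scaleR[of f M "-1"] by simp

lemma L2m_diff:
  assumes f: "f \<in> L2m M" and g: "g \<in> L2m M"
  shows "(\<lambda>x. f x - g x) \<in> L2m M"
  using L2m_add[OF f L2m_uminus[OF g]] by simp

lemma L2m_cscale:
  assumes f: "f \<in> L2m M"
  shows "(\<lambda>x. cscale c (f x)) \<in> L2m M"
proof (rule L2mI)
  have [measurable]: "f \<in> borel_measurable M" using f by (auto dest: L2mD)
  show "(\<lambda>x. cscale c (f x)) \<in> borel_measurable M"
    by (rule meas_blin[OF blin_cscale]) simp
  have "integrable M (\<lambda>x. (cmod c)\<^sup>2 * (norm (f x))\<^sup>2)" using f by (auto dest: L2mD)
  then show "integrable M (\<lambda>x. (norm (cscale c (f x)))\<^sup>2)"
    by (simp add: power_mult_distrib norm_cscale)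
qed

lemma L2m_zero: "(\<lambda>x. 0) \<in> L2m M"
  by (rule L2mI) auto

lemma L2m_lmult:
  fixes X :: "complex^'s^'s" and f :: "'a \<Rightarrow> complex^'r^'s"
  assumes f: "f \<in> L2m M"
  shows "(\<lambda>x. X ** f x) \<in> L2m M"
proof (rule L2mI)
  have [measurable]: "f \<in> borel_measurable M" using f by (auto dest: L2mD)
  show mX: "(\<lambda>x. X ** f x) \<in> borel_measurable M"
    by (rule meas_blin[OF blin_lmult]) simp
  obtain K where K: "\<And>A::complex^'r^'s. norm (X ** A) \<le> norm A * K" "K > 0"
    using bounded_linear.pos_bounded[OF blin_lmult[where X=X]] by blast
  show "integrable M (\<lambda>x. (norm (X ** f x))\<^sup>2)"
  proof (rule Bochner_Integration.integrable_bound[of _ "\<lambda>x. K\<^sup>2 * (norm (f x))\<^sup>2"])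
    show "integrable M (\<lambda>x. K\<^sup>2 * (norm (f x))\<^sup>2)" using f by (auto dest: L2mD)
    show "(\<lambda>x. (norm (X ** f x))\<^sup>2) \<in> borel_measurable M"
      using mX by measurable
    show "AE x in M. norm ((norm (X ** f x))\<^sup>2) \<le> norm (K\<^sup>2 * (norm (f x))\<^sup>2)"
    proof (intro AE_I2)
      fix x
      have "(norm (X ** f x))\<^sup>2 \<le> (norm (f x) * K)\<^sup>2"
        using K(1)[of "f x"] by (simp add: power_mono)
      then show "norm ((norm (X ** f x))\<^sup>2) \<le> norm (K\<^sup>2 * (norm (f x))\<^sup>2)"
        by (simp add: power_mult_distrib mult.commute)
    qed
  qed
qed

lemma L2m_sum:
  assumes "\<And>i. i \<in> I \<Longrightarrow> F i \<in> L2m M"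
  shows "(\<lambda>x. \<Sum>i\<in>I. F i x) \<in> L2m M"
  using assms
proof (induction I rule: infinite_finite_induct)
  case (infinite A) then show ?case by (simp add: L2m_zero)
next
  case empty then show ?case by (simp add: L2m_zero)
next
  case (insert a A)
  then show ?case by (simp add: L2m_add)
qed

lemma int_pip:
  assumes f: "f \<in> L2m M" and g: "g \<in> L2m M"
  shows "integrable M (\<lambda>x. pip (f x) (g x))"
proof (rule Bochner_Integration.integrable_bound[OF L2m_int_prod[OF f g]])
  show "(\<lambda>x. pip (f x) (g x)) \<in> borel_measurable M"
    using f g by (intro meas_bilin[OF bilinear_pip]) (auto dest: L2mD)
  show "AE x in M. norm (pip (f x) (g x)) \<le> norm (norm (f x) * norm (g x))"
    by (intro AE_I2) (simp add: cnorm_pip)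
qed

lemma int_mm:
  fixes f g :: "'a \<Rightarrow> complex^'r^'s"
  assumes f: "f \<in> L2m M" and g: "g \<in> L2m M"
  shows "integrable M (\<lambda>x. f x ** adjm (g x))"
proof -
  interpret bb: bounded_bilinear "\<lambda>(A::complex^'r^'s) (B::complex^'r^'s). A ** adjm B"
    by (rule bilinear_mm)
  obtain K where K: "\<forall>a (b::complex^'r^'s). norm ((a::complex^'r^'s) ** adjm b) \<le> norm a * norm b * K"
    using bb.bounded by blast
  have i: "integrable M (\<lambda>x. norm (f x) * norm (g x) * K)"
    using L2m_int_prod[OF f g] by simp
  show ?thesis
  proof (rule Bochner_Integration.integrable_bound[OF i])
    show "(\<lambda>x. f x ** adjm (g x)) \<in> borel_measurable M"
      using f g by (intro meas_bilin[OF bilinear_mm]) (auto dest: L2mD)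
    show "AE x in M. norm (f x ** adjm (g x)) \<le> norm (norm (f x) * norm (g x) * K)"
      by (intro AE_I2) (metis K abs_ge_self order_trans real_norm_def)
  qed
qed

lemma sip_eq:
  assumes f: "f \<in> L2m M" and g: "g \<in> L2m M"
  shows "sip M f g = (\<integral>x. pip (f x) (g x) \<partial>M)"
proof -
  have "sip M f g = mtrace (mat 1 ** (\<integral>x. f x ** adjm (g x) \<partial>M))"
    by (simp add: sip_def mip_def)
  also have "\<dots> = (\<integral>x. mtrace (mat 1 ** (f x ** adjm (g x))) \<partial>M)"
    by (rule integral_bounded_linear[OF blin_mtrace_mult int_mm[OF f g], symmetric])
  also have "\<dots> = (\<integral>x. pip (f x) (g x) \<partial>M)"
    by (simp add: mtrace_mult_adjm)
  finally show ?thesis .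
qed

lemma sip_lmult:
  assumes f: "f \<in> L2m M" and g: "g \<in> L2m M"
  shows "sip M (\<lambda>x. Y ** f x) g = mtrace (Y ** mip M f g)"
proof -
  have "sip M (\<lambda>x. Y ** f x) g = (\<integral>x. pip (Y ** f x) (g x) \<partial>M)"
    by (rule sip_eq[OF L2m_lmult[OF f] g])
  also have "\<dots> = (\<integral>x. mtrace (Y ** (f x ** adjm (g x))) \<partial>M)"
    by (simp add: mtrace_mult_adjm[symmetric] matrix_mul_assoc)
  also have "\<dots> = mtrace (Y ** mip M f g)"
    unfolding mip_def by (rule integral_bounded_linear[OF blin_mtrace_mult int_mm[OF f g]])
  finally show ?thesis .
qed

lemma l2norm_nonneg: "0 \<le> l2norm M f"
  by (simp add: l2norm_def)

lemma l2norm_sq: "(l2norm M f)\<^sup>2 = (\<integral>x. (norm (f x))\<^sup>2 \<partial>M)"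
  by (simp add: l2norm_def integral_nonneg_AE)

lemma sip_self: assumes "f \<in> L2m M" shows "sip M f f = of_real ((l2norm M f)\<^sup>2)"
  by (simp add: sip_eq[OF assms assms] pip_self l2norm_sq del: of_real_power)

lemma Re_sip_self: assumes "f \<in> L2m M" shows "Re (sip M f f) = (l2norm M f)\<^sup>2"
  by (simp add: sip_self[OF assms])

lemma sip_add_left:
  assumes "f \<in> L2m M" "g \<in> L2m M" "h \<in> L2m M"
  shows "sip M (\<lambda>x. f x + g x) h = sip M f h + sip M g h"
  using assms by (simp add: sip_eq L2m_add pip_add_left int_pip)

lemma sip_diff_left:
  assumes "f \<in> L2m M" "g \<in> L2m M" "h \<in> L2m M"
  shows "sip M (\<lambda>x. f x - g x) h = sip M f h - sip M g h"
  using assms by (simp add: sip_eq L2m_diff pip_diff_left int_pip)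

lemma sip_add_right:
  assumes "f \<in> L2m M" "g \<in> L2m M" "h \<in> L2m M"
  shows "sip M h (\<lambda>x. f x + g x) = sip M h f + sip M h g"
  using assms by (simp add: sip_eq L2m_add pip_add_right int_pip)

lemma sip_diff_right:
  assumes "f \<in> L2m M" "g \<in> L2m M" "h \<in> L2m M"
  shows "sip M h (\<lambda>x. f x - g x) = sip M h f - sip M h g"
  using assms by (simp add: sip_eq L2m_diff pip_diff_right int_pip)

lemma sip_cscale_left:
  assumes "f \<in> L2m M" "g \<in> L2m M"
  shows "sip M (\<lambda>x. cscale c (f x)) g = c * sip M f g"
  using assms by (simp add: sip_eq L2m_cscale pip_cscale_left)

lemma sip_cscale_right:
  assumes "f \<in> L2m M" "g \<in> L2m M"
  shows "sip M f (\<lambda>x. cscale c (g x)) = cnj c * sip M f g"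
  using assms by (simp add: sip_eq L2m_cscale pip_cscale_right)

lemma sip_scaleR_left:
  assumes "f \<in> L2m M" "g \<in> L2m M"
  shows "sip M (\<lambda>x. r *\<^sub>R f x) g = of_real r * sip M f g"
  using assms by (simp add: sip_eq L2m_scaleR pip_scaleR_left sc_comp1)

lemma sip_scaleR_right:
  assumes "f \<in> L2m M" "g \<in> L2m M"
  shows "sip M f (\<lambda>x. r *\<^sub>R g x) = of_real r * sip M f g"
  using assms by (simp add: sip_eq L2m_scaleR pip_scaleR_right sc_comp1)

lemma sip_commute:
  assumes "f \<in> L2m M" "g \<in> L2m M"
  shows "sip M g f = cnj (sip M f g)"
  using assms by (simp add: sip_eq pip_commute[of "g _"])

lemma sip_zero_right: "f \<in> L2m M \<Longrightarrow> sip M f (\<lambda>x. 0) = 0"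
  by (simp add: sip_eq L2m_zero)

lemma sip_zero_left: "f \<in> L2m M \<Longrightarrow> sip M (\<lambda>x. 0) f = 0"
  by (simp add: sip_eq L2m_zero)

lemma sip_sum_left:
  assumes "\<And>i. i \<in> I \<Longrightarrow> F i \<in> L2m M" "g \<in> L2m M"
  shows "sip M (\<lambda>x. \<Sum>i\<in>I. F i x) g = (\<Sum>i\<in>I. sip M (F i) g)"
  using assms
proof (induction I rule: infinite_finite_induct)
  case (infinite A) then show ?case by (simp add: sip_zero_left)
next
  case empty then show ?case by (simp add: sip_zero_left)
next
  case (insert a A)
  have "sip M (\<lambda>x. \<Sum>i\<in>insert a A. F i x) g = sip M (\<lambda>x. F a x + (\<Sum>i\<in>A. F i x)) g"
    using insert by simp
  also have "\<dots> = sip M (F a) g + sip M (\<lambda>x. \<Sum>i\<in>A. F i x) g"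
    using insert by (intro sip_add_left) (auto intro: L2m_sum)
  finally show ?case using insert by simp
qed

lemma sip_cong:
  assumes "f \<in> L2m M" "g \<in> L2m M" "f' \<in> L2m M" "g' \<in> L2m M"
    and "aeq M f f'" "aeq M g g'"
  shows "sip M f g = sip M f' g'"
proof -
  have "(\<integral>x. pip (f x) (g x) \<partial>M) = (\<integral>x. pip (f' x) (g' x) \<partial>M)"
  proof (rule integral_cong_AE)
    show "(\<lambda>x. pip (f x) (g x)) \<in> borel_measurable M" "(\<lambda>x. pip (f' x) (g' x)) \<in> borel_measurable M"
      using assms by (auto intro!: meas_bilin[OF bilinear_pip] dest: L2mD)
    show "AE x in M. pip (f x) (g x) = pip (f' x) (g' x)"
      using assms(5,6) unfolding aeq_def by eventually_elim simp
  qed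
  then show ?thesis using assms by (simp add: sip_eq)
qed

lemma mip_cong:
  assumes "f \<in> L2m M" "g \<in> L2m M" "f' \<in> L2m M" "g' \<in> L2m M"
    and "aeq M f f'" "aeq M g g'"
  shows "mip M f g = mip M f' g'"
  unfolding mip_def
proof (rule integral_cong_AE)
  show "(\<lambda>x. f x ** adjm (g x)) \<in> borel_measurable M" "(\<lambda>x. f' x ** adjm (g' x)) \<in> borel_measurable M"
    using assms by (auto intro!: meas_bilin[OF bilinear_mm] dest: L2mD)
  show "AE x in M. f x ** adjm (g x) = f' x ** adjm (g' x)"
    using assms(5,6) unfolding aeq_def by eventually_elim simp
qed

lemma l2norm_cong:
  assumes "f \<in> L2m M" "f' \<in> L2m M" "aeq M f f'"
  shows "l2norm M f = l2norm M f'"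
proof -
  have "(\<integral>x. (norm (f x))\<^sup>2 \<partial>M) = (\<integral>x. (norm (f' x))\<^sup>2 \<partial>M)"
  proof (rule integral_cong_AE)
    have [measurable]: "f \<in> borel_measurable M" "f' \<in> borel_measurable M"
      using assms by (auto dest: L2mD)
    show "(\<lambda>x. (norm (f x))\<^sup>2) \<in> borel_measurable M" "(\<lambda>x. (norm (f' x))\<^sup>2) \<in> borel_measurable M"
      by measurable
    show "AE x in M. (norm (f x))\<^sup>2 = (norm (f' x))\<^sup>2"
      using assms(3) unfolding aeq_def by eventually_elim simp
  qed
  then show ?thesis by (simp add: l2norm_def)
qed

lemma l2norm_zero_iff:
  assumes "f \<in> L2m M"
  shows "l2norm M f = 0 \<longleftrightarrow> aeq M f (\<lambda>x. 0)"
proof -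
  have "l2norm M f = 0 \<longleftrightarrow> (\<integral>x. (norm (f x))\<^sup>2 \<partial>M) = 0"
    by (simp add: l2norm_def integral_nonneg_AE)
  also have "\<dots> \<longleftrightarrow> (AE x in M. (norm (f x))\<^sup>2 = 0)"
    using assms by (intro integral_nonneg_eq_0_iff_AE) (auto dest: L2mD)
  also have "\<dots> \<longleftrightarrow> aeq M f (\<lambda>x. 0)" by (simp add: aeq_def)
  finally show ?thesis .
qed

lemma aeq_iff_norm:
  assumes "f \<in> L2m M" "g \<in> L2m M"
  shows "aeq M f g \<longleftrightarrow> l2norm M (\<lambda>x. f x - g x) = 0"
  using l2norm_zero_iff[OF L2m_diff[OF assms]] by (simp add: aeq_def)

lemma aeq_refl: "aeq M f f" by (simp add: aeq_def)
lemma aeq_sym: "aeq M f g \<Longrightarrow> aeq M g f" unfolding aeq_def by (auto elim: AE_mp)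
lemma aeq_trans: "aeq M f g \<Longrightarrow> aeq M g h \<Longrightarrow> aeq M f h"
  unfolding aeq_def by (erule AE_mp) (auto elim: AE_mp)
lemma aeq_add: "aeq M f f' \<Longrightarrow> aeq M g g' \<Longrightarrow> aeq M (\<lambda>x. f x + g x) (\<lambda>x. f' x + g' x)"
  unfolding aeq_def by (erule AE_mp) (auto elim: AE_mp)
lemma aeq_diff: "aeq M f f' \<Longrightarrow> aeq M g g' \<Longrightarrow> aeq M (\<lambda>x. f x - g x) (\<lambda>x. f' x - g' x)"
  unfolding aeq_def by (erule AE_mp) (auto elim: AE_mp)
lemma aeq_cscale: "aeq M f f' \<Longrightarrow> aeq M (\<lambda>x. cscale c (f x)) (\<lambda>x. cscale c (f' x))"
  unfolding aeq_def by (auto elim: AE_mp)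
lemma aeq_scaleR: "aeq M f f' \<Longrightarrow> aeq M (\<lambda>x. r *\<^sub>R f x) (\<lambda>x. r *\<^sub>R f' x)"
  unfolding aeq_def by (auto elim: AE_mp)
lemma aeq_lmult: "aeq M f f' \<Longrightarrow> aeq M (\<lambda>x. X ** f x) (\<lambda>x. X ** f' x)"
  unfolding aeq_def by (auto elim: AE_mp)
lemma aeq_sum:
  assumes "finite I" "\<And>i. i \<in> I \<Longrightarrow> aeq M (F i) (G i)"
  shows "aeq M (\<lambda>x. \<Sum>i\<in>I. F i x) (\<lambda>x. \<Sum>i\<in>I. G i x)"
proof -
  have "AE x in M. \<forall>i\<in>I. F i x = G i x"
    using assms unfolding aeq_def by (intro eventually_ball_finite) auto
  then show ?thesis unfolding aeq_def by eventually_elim simp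
qed

lemma sip_CS:
  assumes f: "f \<in> L2m M" and g: "g \<in> L2m M"
  shows "cmod (sip M f g) \<le> l2norm M f * l2norm M g"
proof (cases "l2norm M g = 0")
  case True
  then have "aeq M g (\<lambda>x. 0)" using l2norm_zero_iff[OF g] by simp
  then have "sip M f g = sip M f (\<lambda>x. 0)"
    using f g by (intro sip_cong) (auto simp: aeq_refl L2m_zero)
  then show ?thesis using f by (simp add: sip_zero_right l2norm_nonneg)
next
  case False
  define a where "a = (l2norm M g)\<^sup>2"
  define s where "s = sip M f g"
  define c where "c = s / of_real a"
  have a0: "a > 0" using False l2norm_nonneg[of M g] by (simp add: a_def)
  have cg: "(\<lambda>x. cscale c (g x)) \<in> L2m M" using g by (rule L2m_cscale)
  have h: "(\<lambda>x. f x - cscale c (g x)) \<in> L2m M" using f cg by (rule L2m_diff)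
  have "sip M (\<lambda>x. f x - cscale c (g x)) (\<lambda>x. f x - cscale c (g x))
      = sip M f f - cnj c * s - c * sip M g f + c * cnj c * sip M g g"
    using f g cg
    by (simp add: sip_diff_left sip_diff_right L2m_diff sip_cscale_left sip_cscale_right s_def algebra_simps)
  also have "\<dots> = of_real ((l2norm M f)\<^sup>2) - s * cnj s / of_real a"
  proof -
    have e1: "sip M g f = cnj s" using f g by (simp add: sip_commute[of f M g] s_def)
    have e2: "sip M g g = of_real a" using g by (simp add: sip_self a_def del: of_real_power)
    have e3: "sip M f f = of_real ((l2norm M f)\<^sup>2)" using f by (simp add: sip_self del: of_real_power)
    have an: "complex_of_real a \<noteq> 0" using a0 by simp
    show ?thesis unfolding e1 e2 e3 c_def using an
      by (simp add: field_simps)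
  qed
  also have "\<dots> = of_real ((l2norm M f)\<^sup>2) - of_real ((cmod s)\<^sup>2 / a)"
    using complex_norm_square[of s] by simp
  finally have "Re (sip M (\<lambda>x. f x - cscale c (g x)) (\<lambda>x. f x - cscale c (g x)))
      = (l2norm M f)\<^sup>2 - (cmod s)\<^sup>2 / a" by simp
  moreover have "Re (sip M (\<lambda>x. f x - cscale c (g x)) (\<lambda>x. f x - cscale c (g x))) \<ge> 0"
    by (simp add: Re_sip_self[OF h])
  ultimately have "(cmod s)\<^sup>2 / a \<le> (l2norm M f)\<^sup>2" by simp
  then have "(cmod s)\<^sup>2 \<le> (l2norm M f)\<^sup>2 * a" using a0 by (simp add: field_simps)
  then have "(cmod s)\<^sup>2 \<le> (l2norm M f * l2norm M g)\<^sup>2" by (simp add: a_def power_mult_distrib)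
  then show ?thesis unfolding s_def
    by (rule power2_le_imp_le) (simp add: l2norm_nonneg)
qed

lemma l2norm_add:
  assumes f: "f \<in> L2m M" and g: "g \<in> L2m M"
  shows "l2norm M (\<lambda>x. f x + g x) \<le> l2norm M f + l2norm M g"
proof -
  have "(l2norm M (\<lambda>x. f x + g x))\<^sup>2 = Re (sip M (\<lambda>x. f x + g x) (\<lambda>x. f x + g x))"
    by (simp add: Re_sip_self L2m_add f g)
  also have "\<dots> = (l2norm M f)\<^sup>2 + (l2norm M g)\<^sup>2 + Re (sip M f g) + Re (sip M g f)"
    using f g by (simp add: sip_add_left sip_add_right L2m_add Re_sip_self)
  also have "\<dots> \<le> (l2norm M f)\<^sup>2 + (l2norm M g)\<^sup>2 + 2 * (l2norm M f * l2norm M g)"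
  proof -
    have "Re (sip M f g) \<le> l2norm M f * l2norm M g"
      using complex_Re_le_cmod[of "sip M f g"] sip_CS[OF f g] by linarith
    moreover have "Re (sip M g f) \<le> l2norm M f * l2norm M g"
      using complex_Re_le_cmod[of "sip M g f"] sip_CS[OF g f] by (simp add: mult.commute)
    ultimately show ?thesis by simp
  qed
  also have "\<dots> = (l2norm M f + l2norm M g)\<^sup>2" by (simp add: power2_eq_square algebra_simps)
  finally show ?thesis
    by (rule power2_le_imp_le) (simp add: l2norm_nonneg add_nonneg_nonneg)
qed

lemma l2norm_cscale: "l2norm M (\<lambda>x. cscale c (f x)) = cmod c * l2norm M f"
  by (simp add: l2norm_def norm_cscale power_mult_distrib real_sqrt_mult)

lemma l2norm_scaleR: "l2norm M (\<lambda>x. r *\<^sub>R f x) = \<bar>r\<bar> * l2norm M f"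
  by (simp add: l2norm_def power_mult_distrib real_sqrt_mult)

lemma l2norm_uminus: "l2norm M (\<lambda>x. - f x) = l2norm M f"
  by (simp add: l2norm_def)

lemma l2norm_minus_commute: "l2norm M (\<lambda>x. f x - g x) = l2norm M (\<lambda>x. g x - f x)"
  by (simp add: l2norm_def norm_minus_commute)

lemma l2norm_triangle:
  assumes "f \<in> L2m M" "g \<in> L2m M" "h \<in> L2m M"
  shows "l2norm M (\<lambda>x. f x - g x) \<le> l2norm M (\<lambda>x. f x - h x) + l2norm M (\<lambda>x. h x - g x)"
  using l2norm_add[OF L2m_diff[OF assms(1,3)] L2m_diff[OF assms(3,2)]] by simp

lemma l2norm_diff_le:
  assumes "f \<in> L2m M" "g \<in> L2m M"
  shows "l2norm M (\<lambda>x. f x - g x) \<le> l2norm M f + l2norm M g"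
  using l2norm_add[OF assms(1) L2m_uminus[OF assms(2)]] by (simp add: l2norm_uminus)

lemma l2norm_lmult:
  fixes X :: "complex^'s^'s" and M :: "'a measure"
  shows "\<exists>K\<ge>0. \<forall>f\<in>(L2m M :: ('a \<Rightarrow> complex^'r^'s) set). l2norm M (\<lambda>x. X ** f x) \<le> K * l2norm M f"
proof -
  obtain K where K: "\<And>A::complex^'r^'s. norm (X ** A) \<le> norm A * K" "K > 0"
    using bounded_linear.pos_bounded[OF blin_lmult[where X=X]] by blast
  have "l2norm M (\<lambda>x. X ** f x) \<le> K * l2norm M f" if f: "f \<in> L2m M" for f :: "'a \<Rightarrow> complex^'r^'s"
  proof -
    have "(\<integral>x. (norm (X ** f x))\<^sup>2 \<partial>M) \<le> (\<integral>x. K\<^sup>2 * (norm (f x))\<^sup>2 \<partial>M)"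
    proof (rule integral_mono)
      show "integrable M (\<lambda>x. (norm (X ** f x))\<^sup>2)" using L2m_lmult[OF f] by (auto dest: L2mD)
      show "integrable M (\<lambda>x. K\<^sup>2 * (norm (f x))\<^sup>2)" using f by (auto dest: L2mD)
      fix x
      have "(norm (X ** f x))\<^sup>2 \<le> (norm (f x) * K)\<^sup>2"
        using K(1)[of "f x"] by (simp add: power_mono)
      then show "(norm (X ** f x))\<^sup>2 \<le> K\<^sup>2 * (norm (f x))\<^sup>2"
        by (simp add: power_mult_distrib mult.commute)
    qed
    then have "sqrt (\<integral>x. (norm (X ** f x))\<^sup>2 \<partial>M) \<le> sqrt (K\<^sup>2 * (\<integral>x. (norm (f x))\<^sup>2 \<partial>M))"
      by simp
    then show ?thesis using K(2) by (simp add: l2norm_def real_sqrt_mult)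
  qed
  then show ?thesis using K(2) by (intro exI[of _ K]) auto
qed

lemma summable_diff_convergent:
  fixes a :: "nat \<Rightarrow> 'b::banach"
  assumes "summable (\<lambda>k. norm (a (Suc k) - a k))"
  shows "convergent a"
proof -
  have "summable (\<lambda>k. a (Suc k) - a k)" using assms by (rule summable_norm_cancel)
  then have "(\<lambda>n. \<Sum>k<n. a (Suc k) - a k) \<longlonglongrightarrow> (\<Sum>k. a (Suc k) - a k)"
    by (rule summable_LIMSEQ)
  then have "(\<lambda>n. a n - a 0) \<longlonglongrightarrow> (\<Sum>k. a (Suc k) - a k)"
    by (simp add: sum_lessThan_telescope)
  then have "(\<lambda>n. (a n - a 0) + a 0) \<longlonglongrightarrow> (\<Sum>k. a (Suc k) - a k) + a 0"
    by (intro tendsto_intros)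
  then show ?thesis by (auto simp: convergent_def)
qed

lemma L2_complete:
  fixes u :: "nat \<Rightarrow> 'a \<Rightarrow> complex^'r^'s"
  assumes u: "\<And>n. u n \<in> L2m M"
    and C: "\<And>e. e > 0 \<Longrightarrow> \<exists>N. \<forall>m\<ge>N. \<forall>n\<ge>N. l2norm M (\<lambda>x. u m x - u n x) < e"
  shows "\<exists>v\<in>L2m M. (\<lambda>n. l2norm M (\<lambda>x. u n x - v x)) \<longlonglongrightarrow> 0"
proof -
  have q: "((1/4::real)^k)\<^sup>2 = (1/16)^k" for k
  proof -
    have "((1/4::real)^k)\<^sup>2 = ((1/4)\<^sup>2)^k" by (simp add: power_mult[symmetric] mult.commute)
    then show ?thesis by (simp add: power2_eq_square)
  qed
  have um[measurable]: "\<And>n. u n \<in> borel_measurable M" using u by (auto dest: L2mD)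
  have "\<forall>k. \<exists>N. \<forall>m\<ge>N. \<forall>n\<ge>N. l2norm M (\<lambda>x. u m x - u n x) < (1/4)^k"
    using C by simp
  then obtain N where N: "\<And>k m n. m \<ge> N k \<Longrightarrow> n \<ge> N k \<Longrightarrow> l2norm M (\<lambda>x. u m x - u n x) < (1/4)^k"
    by metis
  define r where "r k = (\<Sum>j\<le>k. N j) + k" for k
  have rmono: "r k \<le> r j" if "k \<le> j" for k j
  proof -
    have "(\<Sum>i\<le>k. N i) \<le> (\<Sum>i\<le>j. N i)" using that by (intro sum_mono2) auto
    then show ?thesis using that by (simp add: r_def)
  qed
  have rN: "N k \<le> r j" if "k \<le> j" for k j
  proof -
    have "N k \<le> (\<Sum>i\<le>k. N i)" by (rule member_le_sum) auto
    then have "N k \<le> r k" by (simp add: r_def)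
    then show ?thesis using rmono[OF that] by simp
  qed
  define D where "D k x = norm (u (r (Suc k)) x - u (r k) x)" for k x
  have Dm[measurable]: "(\<lambda>x. D k x) \<in> borel_measurable M" for k unfolding D_def by measurable
  have intD: "integrable M (\<lambda>x. (D k x)\<^sup>2)" for k
    unfolding D_def using L2m_diff[OF u u] by (auto dest: L2mD)
  have intD_le: "(\<integral>x. (D k x)\<^sup>2 \<partial>M) \<le> (1/16)^k" for k
  proof -
    have "l2norm M (\<lambda>x. u (r (Suc k)) x - u (r k) x) < (1/4)^k"
      using N rN by auto
    then have "(l2norm M (\<lambda>x. u (r (Suc k)) x - u (r k) x))\<^sup>2 \<le> ((1/4)^k)\<^sup>2"
      by (intro power_mono) (auto simp: l2norm_nonneg)
    then show ?thesis using q by (simp add: l2norm_sq D_def)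
  qed
  define G where "G x = (\<Sum>k. ennreal (4^k * (D k x)\<^sup>2))" for x
  have Gm: "G \<in> borel_measurable M" unfolding G_def by measurable
  have "(\<integral>\<^sup>+x. G x \<partial>M) = (\<Sum>k. \<integral>\<^sup>+x. ennreal (4^k * (D k x)\<^sup>2) \<partial>M)"
    unfolding G_def by (rule nn_integral_suminf) measurable
  also have "\<dots> = (\<Sum>k. ennreal (4^k * (\<integral>x. (D k x)\<^sup>2 \<partial>M)))"
  proof -
    have "(\<integral>\<^sup>+x. ennreal (4^k * (D k x)\<^sup>2) \<partial>M) = ennreal (4^k * (\<integral>x. (D k x)\<^sup>2 \<partial>M))" for k
      using intD[of k] by (subst nn_integral_eq_integral) auto
    then show ?thesis by simp
  qed
  also have "\<dots> \<le> (\<Sum>k. ennreal ((1/4)^k))"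
  proof (intro suminf_le summableI)
    fix k
    have "4^k * (\<integral>x. (D k x)\<^sup>2 \<partial>M) \<le> 4^k * (1/16)^k"
      using intD_le[of k] by (intro mult_left_mono) auto
    also have "\<dots> = (1/4)^k"
    proof -
      have "(16::real)^k = 4^k * 4^k" by (simp flip: power_mult_distrib)
      then show ?thesis by (simp add: power_divide)
    qed
    finally show "ennreal (4^k * (\<integral>x. (D k x)\<^sup>2 \<partial>M)) \<le> ennreal ((1/4)^k)"
      by (rule ennreal_leI)
  qed
  also have "\<dots> = ennreal (4/3)"
    using geometric_sums[of "1/4::real"] by (intro suminf_ennreal_eq) auto
  finally have Gfin: "(\<integral>\<^sup>+x. G x \<partial>M) < \<infinity>" by (simp add: le_less_trans)
  have AEG: "AE x in M. G x < \<infinity>"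
    by (rule finite_nn_integral_imp_ae_finite[OF Gm Gfin])
  have conv: "AE x in M. convergent (\<lambda>k. u (r k) x)"
    using AEG
  proof eventually_elim
    fix x assume "G x < \<infinity>"
    then have "summable (\<lambda>k. 4^k * (D k x)\<^sup>2)"
      by (intro summable_suminf_not_top) (auto simp: G_def)
    then have "(\<lambda>k. 4^k * (D k x)\<^sup>2) \<longlonglongrightarrow> 0" by (rule summable_LIMSEQ_zero)
    then have "eventually (\<lambda>k. 4^k * (D k x)\<^sup>2 < 1) sequentially"
      by (rule order_tendstoD(2)) simp
    then have ev: "eventually (\<lambda>k. norm (D k x) \<le> (1/2)^k) sequentially"
    proof eventually_elim
      fix k assume "4^k * (D k x)\<^sup>2 < 1"
      have h4: "((1/2::real)^k)\<^sup>2 = 1/4^k"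
      proof -
        have "((1/2::real)^k)\<^sup>2 = ((1/2)\<^sup>2)^k" by (simp add: power_mult[symmetric] mult.commute)
        then show ?thesis by (simp add: power2_eq_square power_divide)
      qed
      have "(D k x)\<^sup>2 \<le> 1/4^k"
        using \<open>4^k * (D k x)\<^sup>2 < 1\<close> by (simp add: field_simps)
      then have "(D k x)\<^sup>2 \<le> ((1/2)^k)\<^sup>2" using h4 by simp
      then have "D k x \<le> (1/2)^k" by (rule power2_le_imp_le) simp
      then show "norm (D k x) \<le> (1/2)^k" by (simp add: D_def)
    qed
    have "summable (\<lambda>k. D k x)"
      by (rule summable_comparison_test_ev[OF ev]) (simp add: summable_geometric)
    then show "convergent (\<lambda>k. u (r k) x)"
      by (intro summable_diff_convergent) (simp add: D_def)
  qed
  define v where "v x = lim (\<lambda>k. u (r k) x)" for x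
  have vm[measurable]: "v \<in> borel_measurable M" unfolding v_def by measurable
  have vlim: "AE x in M. (\<lambda>k. u (r k) x) \<longlonglongrightarrow> v x"
    using conv by eventually_elim (simp add: v_def convergent_LIMSEQ_iff)
  have key: "(\<lambda>x. u (r k) x - v x) \<in> L2m M \<and> l2norm M (\<lambda>x. u (r k) x - v x) \<le> (1/4)^k" for k
  proof -
    have "(\<integral>\<^sup>+x. ennreal ((norm (u (r k) x - v x))\<^sup>2) \<partial>M)
        = (\<integral>\<^sup>+x. liminf (\<lambda>j. ennreal ((norm (u (r k) x - u (r j) x))\<^sup>2)) \<partial>M)"
    proof (rule nn_integral_cong_AE)
      show "AE x in M. ennreal ((norm (u (r k) x - v x))\<^sup>2)
           = liminf (\<lambda>j. ennreal ((norm (u (r k) x - u (r j) x))\<^sup>2))"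
        using vlim
      proof eventually_elim
        fix x assume "(\<lambda>k. u (r k) x) \<longlonglongrightarrow> v x"
        then have "(\<lambda>j. ennreal ((norm (u (r k) x - u (r j) x))\<^sup>2)) \<longlonglongrightarrow> ennreal ((norm (u (r k) x - v x))\<^sup>2)"
          by (intro tendsto_intros)
        then have "liminf (\<lambda>j. ennreal ((norm (u (r k) x - u (r j) x))\<^sup>2))
           = ennreal ((norm (u (r k) x - v x))\<^sup>2)"
          by (rule lim_imp_Liminf[OF trivial_limit_sequentially])
        then show "ennreal ((norm (u (r k) x - v x))\<^sup>2)
           = liminf (\<lambda>j. ennreal ((norm (u (r k) x - u (r j) x))\<^sup>2))"
          by simp
      qed
    qed
    also have "\<dots> \<le> liminf (\<lambda>j. \<integral>\<^sup>+x. ennreal ((norm (u (r k) x - u (r j) x))\<^sup>2) \<partial>M)"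
      by (rule nn_integral_liminf) measurable
    also have "\<dots> \<le> ennreal ((1/16)^k)"
    proof -
      have "eventually (\<lambda>j. (\<integral>\<^sup>+x. ennreal ((norm (u (r k) x - u (r j) x))\<^sup>2) \<partial>M) \<le> ennreal ((1/16)^k)) sequentially"
        using eventually_ge_at_top[of k]
      proof eventually_elim
        fix j assume kj: "k \<le> j"
        have int: "integrable M (\<lambda>x. (norm (u (r k) x - u (r j) x))\<^sup>2)"
          using L2m_diff[OF u u] by (auto dest: L2mD)
        have "l2norm M (\<lambda>x. u (r k) x - u (r j) x) < (1/4)^k"
          using N rN kj by auto
        then have "(l2norm M (\<lambda>x. u (r k) x - u (r j) x))\<^sup>2 \<le> ((1/4)^k)\<^sup>2"
          by (intro power_mono) (auto simp: l2norm_nonneg)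
        then have le: "(\<integral>x. (norm (u (r k) x - u (r j) x))\<^sup>2 \<partial>M) \<le> (1/16)^k"
          using q by (simp add: l2norm_sq)
        show "(\<integral>\<^sup>+x. ennreal ((norm (u (r k) x - u (r j) x))\<^sup>2) \<partial>M) \<le> ennreal ((1/16)^k)"
          using int le by (subst nn_integral_eq_integral) (auto intro: ennreal_leI)
      qed
      then have "limsup (\<lambda>j. \<integral>\<^sup>+x. ennreal ((norm (u (r k) x - u (r j) x))\<^sup>2) \<partial>M) \<le> ennreal ((1/16)^k)"
        by (rule Limsup_bounded)
      then show ?thesis using Liminf_le_Limsup[of sequentially] order_trans by fastforce
    qed
    finally have fin: "(\<integral>\<^sup>+x. ennreal ((norm (u (r k) x - v x))\<^sup>2) \<partial>M) \<le> ennreal ((1/16)^k)" .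
    have int: "integrable M (\<lambda>x. (norm (u (r k) x - v x))\<^sup>2)"
    proof (rule integrableI_bounded)
      show "(\<lambda>x. (norm (u (r k) x - v x))\<^sup>2) \<in> borel_measurable M" by measurable
      show "(\<integral>\<^sup>+x. ennreal (norm ((norm (u (r k) x - v x))\<^sup>2)) \<partial>M) < \<infinity>"
        using fin by (simp add: le_less_trans)
    qed
    have L: "(\<lambda>x. u (r k) x - v x) \<in> L2m M"
      by (rule L2mI) (use int in auto)
    have "ennreal (\<integral>x. (norm (u (r k) x - v x))\<^sup>2 \<partial>M) \<le> ennreal ((1/16)^k)"
      using fin int by (subst (asm) nn_integral_eq_integral) auto
    then have "(\<integral>x. (norm (u (r k) x - v x))\<^sup>2 \<partial>M) \<le> (1/16)^k"
      by (simp add: ennreal_le_iff)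
    then have "(l2norm M (\<lambda>x. u (r k) x - v x))\<^sup>2 \<le> ((1/4)^k)\<^sup>2"
      using q by (simp add: l2norm_sq)
    then have "l2norm M (\<lambda>x. u (r k) x - v x) \<le> (1/4)^k"
      by (rule power2_le_imp_le) simp
    with L show ?thesis by simp
  qed
  have vL: "v \<in> L2m M"
  proof -
    have "(\<lambda>x. u (r 0) x - (u (r 0) x - v x)) \<in> L2m M"
      by (rule L2m_diff[OF u conjunct1[OF key[of 0]]])
    then show ?thesis by simp
  qed
  show ?thesis
  proof (intro bexI[OF _ vL] LIMSEQ_I)
    fix e :: real assume e: "e > 0"
    obtain k where k: "(1/4::real)^k < e/2" using real_arch_pow_inv[of "e/2" "1/4"] e by auto
    have "\<forall>n\<ge>N k. norm (l2norm M (\<lambda>x. u n x - v x)) < e"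
    proof (intro allI impI)
      fix n assume n: "n \<ge> N k"
      have "l2norm M (\<lambda>x. u n x - v x) \<le> l2norm M (\<lambda>x. u n x - u (r k) x) + l2norm M (\<lambda>x. u (r k) x - v x)"
        by (rule l2norm_triangle[OF u vL u])
      also have "\<dots> < (1/4)^k + (1/4)^k"
        using N[OF n rN[of k k]] key[of k] by auto
      finally show "norm (l2norm M (\<lambda>x. u n x - v x)) < e" using k by (simp add: l2norm_nonneg)
    qed
    then show "\<exists>no. \<forall>n\<ge>no. norm (l2norm M (\<lambda>x. u n x - v x) - 0) < e" by auto
  qed
qed

definition acoef :: "nat \<Rightarrow> real" where
  "acoef n = (-1)^n * ((1/2::real) gchoose n)"

lemma acoef_poch: "acoef n = pochhammer (-1/2) n / fact n"
  by (simp add: acoef_def gbinomial_pochhammer)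

lemma acoef_0[simp]: "acoef 0 = 1"
  by (simp add: acoef_def)

lemma acoef_nonpos: "n \<ge> 1 \<Longrightarrow> acoef n \<le> 0"
proof -
  assume "n \<ge> 1"
  then obtain m where m: "n = Suc m" by (cases n) auto
  have "pochhammer (-1/2::real) (Suc m) = (-1/2) * pochhammer (1/2) m"
    by (simp add: pochhammer_rec)
  moreover have "pochhammer (1/2::real) m > 0" by (rule pochhammer_pos) simp
  ultimately have "pochhammer (-1/2::real) (Suc m) \<le> 0" by simp
  then show ?thesis by (simp add: acoef_poch m divide_nonpos_pos)
qed

lemma acoef_partial_nonneg: "0 \<le> (\<Sum>n\<le>m. acoef n)"
proof -
  have "(\<Sum>n\<le>m. acoef n) = (\<Sum>k\<le>m. ((1/2::real) gchoose k) * (- 1) ^ k)"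
    by (simp add: acoef_def mult.commute)
  also have "\<dots> = (-1)^m * ((1/2 - 1) gchoose m)" by (rule gbinomial_sum_lower_neg)
  also have "\<dots> = pochhammer (1/2) m / fact m"
    by (simp add: gbinomial_pochhammer)
  also have "\<dots> \<ge> 0" by (simp add: pochhammer_pos less_imp_le)
  finally show ?thesis .
qed

lemma acoef_partial_nonneg': "0 \<le> (\<Sum>n<N. acoef n)"
proof (cases N)
  case 0 then show ?thesis by simp
next
  case (Suc m)
  then have "{..<N} = {..m}" by auto
  then show ?thesis using acoef_partial_nonneg[of m] by simp
qed

lemma acoef_abs_partial: "(\<Sum>n<N. \<bar>acoef n\<bar>) \<le> 2"
proof (cases N)
  case 0 then show ?thesis by simp
next
  case (Suc m)
  have "(\<Sum>n<N. \<bar>acoef n\<bar>) = (\<Sum>n<N. 2 * (if n = 0 then 1 else 0) - acoef n)"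
  proof (rule sum.cong)
    fix n assume "n \<in> {..<N}"
    show "\<bar>acoef n\<bar> = 2 * (if n = 0 then 1 else 0) - acoef n"
      using acoef_nonpos[of n] by (cases "n = 0") auto
  qed simp
  also have "\<dots> = 2 - (\<Sum>n<N. acoef n)"
    using Suc by (simp add: sum_subtractf sum_distrib_left[symmetric])
  also have "\<dots> \<le> 2" using acoef_partial_nonneg'[of N] by simp
  finally show ?thesis .
qed

lemma summable_acoef: "summable (\<lambda>n. \<bar>acoef n\<bar>)"
  by (rule summableI_nonneg_bounded[where x=2]) (auto intro: acoef_abs_partial)

lemma suminf_acoef_le: "(\<Sum>n. \<bar>acoef n\<bar>) \<le> 2"
  using summable_acoef acoef_abs_partial by (intro suminf_le_const) auto

lemma acoef_cauchy:
  "(\<Sum>i=0..n. acoef i * acoef (n - i)) = (if n = 0 then 1 else if n = 1 then -1 else 0)"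
proof -
  have "(\<Sum>i=0..n. acoef i * acoef (n - i)) = (-1)^n * (\<Sum>i=0..n. ((1/2::real) gchoose i) * ((1/2) gchoose (n - i)))"
    unfolding sum_distrib_left
  proof (rule sum.cong)
    fix i assume "i \<in> {0..n}"
    then have "(-1::real)^i * (-1)^(n-i) = (-1)^n" by (simp flip: power_add)
    then show "acoef i * acoef (n - i) = (-1)^n * (((1/2::real) gchoose i) * ((1/2) gchoose (n - i)))"
      by (simp add: acoef_def algebra_simps)
  qed simp
  also have "\<dots> = (-1)^n * ((1::real) gchoose n)"
    using gbinomial_Vandermonde[of "1/2::real" "1/2" n] by simp
  also have "\<dots> = (-1)^n * of_nat (1 choose n)"
    using binomial_gbinomial[of 1 n, where 'a=real] by simp
  also have "\<dots> = (if n = 0 then 1 else if n = 1 then -1 else 0)"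
    by (cases n) (auto simp: binomial_eq_0)
  finally show ?thesis .
qed

declare aeq_trans[trans]

lemma aeq_eq_trans: "aeq M f g \<Longrightarrow> (\<And>x. g x = h x) \<Longrightarrow> aeq M f h"
  by (simp add: aeq_def)

lemma aeq_eq_trans': "(\<And>x. f x = g x) \<Longrightarrow> aeq M g h \<Longrightarrow> aeq M f h"
  by (simp add: aeq_def)

lemma blo_L2: "bounded_linear_op M U \<Longrightarrow> f \<in> L2m M \<Longrightarrow> U f \<in> L2m M"
  by (simp add: bounded_linear_op_def)

lemma blo_cong: "bounded_linear_op M U \<Longrightarrow> f \<in> L2m M \<Longrightarrow> g \<in> L2m M \<Longrightarrow> aeq M f g \<Longrightarrow> aeq M (U f) (U g)"
  by (simp add: bounded_linear_op_def)

lemma blo_lin: "bounded_linear_op M U \<Longrightarrow> f \<in> L2m M \<Longrightarrow> g \<in> L2m M \<Longrightarrow>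
  aeq M (U (\<lambda>x. cscale a (f x) + cscale b (g x))) (\<lambda>x. cscale a (U f x) + cscale b (U g x))"
  by (simp add: bounded_linear_op_def)

lemma blo_bound:
  fixes U V :: "('a \<Rightarrow> complex^'r::finite^'s::finite) \<Rightarrow> ('a \<Rightarrow> complex^'r^'s)"
  assumes "bounded_linear_op M U"
  shows "\<exists>C>0. \<forall>f\<in>L2m M. l2norm M (U f) \<le> C * l2norm M f"
proof -
  obtain C where C: "\<forall>f\<in>L2m M. l2norm M (U f) \<le> C * l2norm M f"
    using assms by (auto simp: bounded_linear_op_def)
  have "\<forall>f\<in>L2m M. l2norm M (U f) \<le> max C 1 * l2norm M f"
  proof
    fix f :: "'a \<Rightarrow> complex^'r^'s" assume "f \<in> L2m M"
    then have "l2norm M (U f) \<le> C * l2norm M f" using C by auto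
    also have "\<dots> \<le> max C 1 * l2norm M f" by (intro mult_right_mono) (auto simp: l2norm_nonneg)
    finally show "l2norm M (U f) \<le> max C 1 * l2norm M f" .
  qed
  then show ?thesis by (intro exI[of _ "max C 1"]) auto
qed

lemma blo_add: "bounded_linear_op M U \<Longrightarrow> f \<in> L2m M \<Longrightarrow> g \<in> L2m M \<Longrightarrow>
  aeq M (U (\<lambda>x. f x + g x)) (\<lambda>x. U f x + U g x)"
  using blo_lin[of M U f g 1 1] by simp

lemma blo_cscale: "bounded_linear_op M U \<Longrightarrow> f \<in> L2m M \<Longrightarrow>
  aeq M (U (\<lambda>x. cscale c (f x))) (\<lambda>x. cscale c (U f x))"
  using blo_lin[of M U f f c 0] by simp

lemma blo_scaleR: "bounded_linear_op M U \<Longrightarrow> f \<in> L2m M \<Longrightarrow>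
  aeq M (U (\<lambda>x. r *\<^sub>R f x)) (\<lambda>x. r *\<^sub>R U f x)"
  using blo_cscale[of M U f "of_real r"] by (simp add: cscale_of_real)

lemma blo_diff: "bounded_linear_op M U \<Longrightarrow> f \<in> L2m M \<Longrightarrow> g \<in> L2m M \<Longrightarrow>
  aeq M (U (\<lambda>x. f x - g x)) (\<lambda>x. U f x - U g x)"
  using blo_lin[of M U f g 1 "-1"] by (simp add: cscale_minus_one)

lemma blo_zero: assumes U: "bounded_linear_op M U" shows "aeq M (U (\<lambda>x. 0)) (\<lambda>x. 0)"
proof -
  have z: "(\<lambda>x. 0) \<in> L2m M" by (rule L2m_zero)
  show ?thesis using blo_cscale[OF U z, of 0] by simp
qed

lemma blo_lincomb:
  assumes U: "bounded_linear_op M U" and I: "finite I" and F: "\<And>i. i \<in> I \<Longrightarrow> F i \<in> L2m M"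
  shows "aeq M (U (\<lambda>x. \<Sum>i\<in>I. c i *\<^sub>R F i x)) (\<lambda>x. \<Sum>i\<in>I. c i *\<^sub>R U (F i) x)"
  using I F
proof (induction I rule: finite_induct)
  case empty then show ?case using blo_zero[OF U] by simp
next
  case (insert a A)
  have FA: "(\<lambda>x. \<Sum>i\<in>A. c i *\<^sub>R F i x) \<in> L2m M"
    using insert by (intro L2m_sum L2m_scaleR) auto
  have Fa: "(\<lambda>x. c a *\<^sub>R F a x) \<in> L2m M" using insert by (intro L2m_scaleR) auto
  have "aeq M (U (\<lambda>x. \<Sum>i\<in>insert a A. c i *\<^sub>R F i x)) (U (\<lambda>x. c a *\<^sub>R F a x + (\<Sum>i\<in>A. c i *\<^sub>R F i x)))"
    using insert by (simp add: aeq_refl)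
  also have "aeq M \<dots> (\<lambda>x. U (\<lambda>x. c a *\<^sub>R F a x) x + U (\<lambda>x. \<Sum>i\<in>A. c i *\<^sub>R F i x) x)"
    by (rule blo_add[OF U Fa FA])
  finally have 1: "aeq M (U (\<lambda>x. \<Sum>i\<in>insert a A. c i *\<^sub>R F i x))
      (\<lambda>x. U (\<lambda>x. c a *\<^sub>R F a x) x + U (\<lambda>x. \<Sum>i\<in>A. c i *\<^sub>R F i x) x)" .
  have 2: "aeq M (\<lambda>x. U (\<lambda>x. c a *\<^sub>R F a x) x + U (\<lambda>x. \<Sum>i\<in>A. c i *\<^sub>R F i x) x)
      (\<lambda>x. c a *\<^sub>R U (F a) x + (\<Sum>i\<in>A. c i *\<^sub>R U (F i) x))"
    using insert by (intro aeq_add blo_scaleR[OF U]) auto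
  show ?case using aeq_trans[OF 1 2] insert by simp
qed

lemma blo_dist:
  assumes U: "bounded_linear_op M U" and C: "\<forall>f\<in>L2m M. l2norm M (U f) \<le> C * l2norm M f"
    and f: "f \<in> L2m M" and g: "g \<in> L2m M"
  shows "l2norm M (\<lambda>x. U f x - U g x) \<le> C * l2norm M (\<lambda>x. f x - g x)"
proof -
  have "l2norm M (\<lambda>x. U f x - U g x) = l2norm M (U (\<lambda>x. f x - g x))"
    by (rule l2norm_cong[OF L2m_diff[OF blo_L2[OF U f] blo_L2[OF U g]] blo_L2[OF U L2m_diff[OF f g]]
          aeq_sym[OF blo_diff[OF U f g]]])
  also have "\<dots> \<le> C * l2norm M (\<lambda>x. f x - g x)" using C L2m_diff[OF f g] by auto
  finally show ?thesis .
qed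

lemma blo_id: "bounded_linear_op M (\<lambda>f. f)"
  unfolding bounded_linear_op_def by (auto simp: aeq_refl intro: exI[of _ 1])

lemma blo_zeroop: "bounded_linear_op M (\<lambda>f x. 0)"
  unfolding bounded_linear_op_def by (auto simp: aeq_refl L2m_zero l2norm_def intro: exI[of _ 0])

lemma blo_comp:
  fixes U V :: "('a \<Rightarrow> complex^'r::finite^'s::finite) \<Rightarrow> ('a \<Rightarrow> complex^'r^'s)"
  assumes U: "bounded_linear_op M U" and V: "bounded_linear_op M V"
  shows "bounded_linear_op M (\<lambda>f. U (V f))"
  unfolding bounded_linear_op_def
proof (intro conjI ballI allI)
  fix f :: "'a \<Rightarrow> complex^'r^'s" assume f: "f \<in> L2m M"
  show "U (V f) \<in> L2m M" using f U V by (simp add: blo_L2)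
next
  fix f g :: "'a \<Rightarrow> complex^'r^'s" assume f: "f \<in> L2m M" and g: "g \<in> L2m M"
  show "aeq M f g \<longrightarrow> aeq M (U (V f)) (U (V g))"
    using blo_cong[OF U blo_L2[OF V f] blo_L2[OF V g] blo_cong[OF V f g]] by blast
  fix a b
  have h: "(\<lambda>x. cscale a (f x) + cscale b (g x)) \<in> L2m M" using f g by (intro L2m_add L2m_cscale)
  have h': "(\<lambda>x. cscale a (V f x) + cscale b (V g x)) \<in> L2m M"
    by (intro L2m_add L2m_cscale blo_L2[OF V f] blo_L2[OF V g])
  have "aeq M (U (V (\<lambda>x. cscale a (f x) + cscale b (g x)))) (U (\<lambda>x. cscale a (V f x) + cscale b (V g x)))"
    by (rule blo_cong[OF U blo_L2[OF V h] h' blo_lin[OF V f g]])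
  also have "aeq M \<dots> (\<lambda>x. cscale a (U (V f) x) + cscale b (U (V g) x))"
    by (rule blo_lin[OF U blo_L2[OF V f] blo_L2[OF V g]])
  finally show "aeq M (U (V (\<lambda>x. cscale a (f x) + cscale b (g x)))) (\<lambda>x. cscale a (U (V f) x) + cscale b (U (V g) x))" .
next
  obtain C1 where C1: "C1 > 0" "\<forall>f\<in>L2m M. l2norm M (U f) \<le> C1 * l2norm M f" using blo_bound[OF U] by auto
  obtain C2 where C2: "C2 > 0" "\<forall>f\<in>L2m M. l2norm M (V f) \<le> C2 * l2norm M f" using blo_bound[OF V] by auto
  have "\<forall>f\<in>L2m M. l2norm M (U (V f)) \<le> (C1 * C2) * l2norm M f"
  proof
    fix f :: "'a \<Rightarrow> complex^'r^'s" assume f: "f \<in> L2m M"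
    have "l2norm M (U (V f)) \<le> C1 * l2norm M (V f)" using C1 blo_L2[OF V f] by auto
    also have "\<dots> \<le> C1 * (C2 * l2norm M f)" using C1 C2 f by (intro mult_left_mono) auto
    finally show "l2norm M (U (V f)) \<le> (C1 * C2) * l2norm M f" by (simp add: mult.assoc)
  qed
  then show "\<exists>C. \<forall>f\<in>L2m M. l2norm M (U (V f)) \<le> C * l2norm M f" by blast
qed

lemma blo_addop:
  fixes U V :: "('a \<Rightarrow> complex^'r::finite^'s::finite) \<Rightarrow> ('a \<Rightarrow> complex^'r^'s)"
  assumes U: "bounded_linear_op M U" and V: "bounded_linear_op M V"
  shows "bounded_linear_op M (\<lambda>f x. U f x + V f x)"
  unfolding bounded_linear_op_def
proof (intro conjI ballI allI)
  fix f :: "'a \<Rightarrow> complex^'r^'s" assume f: "f \<in> L2m M"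
  show "(\<lambda>x. U f x + V f x) \<in> L2m M" by (rule L2m_add[OF blo_L2[OF U f] blo_L2[OF V f]])
next
  fix f g :: "'a \<Rightarrow> complex^'r^'s" assume f: "f \<in> L2m M" and g: "g \<in> L2m M"
  show "aeq M f g \<longrightarrow> aeq M (\<lambda>x. U f x + V f x) (\<lambda>x. U g x + V g x)"
    using aeq_add[OF blo_cong[OF U f g] blo_cong[OF V f g]] by blast
  fix a b
  have "aeq M (\<lambda>x. U (\<lambda>x. cscale a (f x) + cscale b (g x)) x + V (\<lambda>x. cscale a (f x) + cscale b (g x)) x)
      (\<lambda>x. (cscale a (U f x) + cscale b (U g x)) + (cscale a (V f x) + cscale b (V g x)))"
    by (rule aeq_add[OF blo_lin[OF U f g] blo_lin[OF V f g]])
  then show "aeq M (\<lambda>x. U (\<lambda>x. cscale a (f x) + cscale b (g x)) x + V (\<lambda>x. cscale a (f x) + cscale b (g x)) x)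
      (\<lambda>x. cscale a (U f x + V f x) + cscale b (U g x + V g x))"
    by (rule aeq_eq_trans) (simp add: cscale_add algebra_simps)
next
  obtain C1 where C1: "C1 > 0" "\<forall>f\<in>L2m M. l2norm M (U f) \<le> C1 * l2norm M f" using blo_bound[OF U] by auto
  obtain C2 where C2: "C2 > 0" "\<forall>f\<in>L2m M. l2norm M (V f) \<le> C2 * l2norm M f" using blo_bound[OF V] by auto
  have "\<forall>f\<in>L2m M. l2norm M (\<lambda>x. U f x + V f x) \<le> (C1 + C2) * l2norm M f"
  proof
    fix f :: "'a \<Rightarrow> complex^'r^'s" assume f: "f \<in> L2m M"
    have "l2norm M (\<lambda>x. U f x + V f x) \<le> l2norm M (U f) + l2norm M (V f)"
      by (rule l2norm_add[OF blo_L2[OF U f] blo_L2[OF V f]])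
    also have "\<dots> \<le> C1 * l2norm M f + C2 * l2norm M f" using C1 C2 f by (intro add_mono) auto
    finally show "l2norm M (\<lambda>x. U f x + V f x) \<le> (C1 + C2) * l2norm M f" by (simp add: algebra_simps)
  qed
  then show "\<exists>C. \<forall>f\<in>L2m M. l2norm M (\<lambda>x. U f x + V f x) \<le> C * l2norm M f" by blast
qed

lemma blo_scaleRop:
  fixes U V :: "('a \<Rightarrow> complex^'r::finite^'s::finite) \<Rightarrow> ('a \<Rightarrow> complex^'r^'s)"
  assumes U: "bounded_linear_op M U"
  shows "bounded_linear_op M (\<lambda>f x. r *\<^sub>R U f x)"
  unfolding bounded_linear_op_def
proof (intro conjI ballI allI)
  fix f :: "'a \<Rightarrow> complex^'r^'s" assume f: "f \<in> L2m M"
  show "(\<lambda>x. r *\<^sub>R U f x) \<in> L2m M" by (rule L2m_scaleR[OF blo_L2[OF U f]])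
next
  fix f g :: "'a \<Rightarrow> complex^'r^'s" assume f: "f \<in> L2m M" and g: "g \<in> L2m M"
  show "aeq M f g \<longrightarrow> aeq M (\<lambda>x. r *\<^sub>R U f x) (\<lambda>x. r *\<^sub>R U g x)"
    using aeq_scaleR[OF blo_cong[OF U f g]] by blast
  fix a b
  have "aeq M (\<lambda>x. r *\<^sub>R U (\<lambda>x. cscale a (f x) + cscale b (g x)) x)
      (\<lambda>x. r *\<^sub>R (cscale a (U f x) + cscale b (U g x)))"
    by (rule aeq_scaleR[OF blo_lin[OF U f g]])
  then show "aeq M (\<lambda>x. r *\<^sub>R U (\<lambda>x. cscale a (f x) + cscale b (g x)) x)
      (\<lambda>x. cscale a (r *\<^sub>R U f x) + cscale b (r *\<^sub>R U g x))"
    by (rule aeq_eq_trans) (simp add: cscale_scaleR scaleR_add_right)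
next
  obtain C1 where C1: "C1 > 0" "\<forall>f\<in>L2m M. l2norm M (U f) \<le> C1 * l2norm M f" using blo_bound[OF U] by auto
  have "\<forall>f\<in>L2m M. l2norm M (\<lambda>x. r *\<^sub>R U f x) \<le> (\<bar>r\<bar> * C1) * l2norm M f"
  proof
    fix f :: "'a \<Rightarrow> complex^'r^'s" assume f: "f \<in> L2m M"
    have "l2norm M (\<lambda>x. r *\<^sub>R U f x) = \<bar>r\<bar> * l2norm M (U f)" by (rule l2norm_scaleR)
    also have "\<dots> \<le> \<bar>r\<bar> * (C1 * l2norm M f)" using C1 f by (intro mult_left_mono) auto
    finally show "l2norm M (\<lambda>x. r *\<^sub>R U f x) \<le> (\<bar>r\<bar> * C1) * l2norm M f" by (simp add: mult.assoc)
  qed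
  then show "\<exists>C. \<forall>f\<in>L2m M. l2norm M (\<lambda>x. r *\<^sub>R U f x) \<le> C * l2norm M f" by blast
qed

lemma blo_diffop:
  assumes U: "bounded_linear_op M U" and V: "bounded_linear_op M V"
  shows "bounded_linear_op M (\<lambda>f x. U f x - V f x)"
proof -
  have "bounded_linear_op M (\<lambda>f x. U f x + (\<lambda>f x. (-1) *\<^sub>R V f x) f x)"
    by (rule blo_addop[OF U blo_scaleRop[OF V]])
  then show ?thesis by simp
qed

lemma blo_sumop:
  assumes I: "finite I" and U: "\<And>i. i \<in> I \<Longrightarrow> bounded_linear_op M (U i)"
  shows "bounded_linear_op M (\<lambda>f x. \<Sum>i\<in>I. c i *\<^sub>R U i f x)"
  using I U
proof (induction I rule: finite_induct)
  case empty then show ?case using blo_zeroop by simp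
next
  case (insert a A)
  have "bounded_linear_op M (\<lambda>f x. (\<lambda>f x. c a *\<^sub>R U a f x) f x + (\<lambda>f x. \<Sum>i\<in>A. c i *\<^sub>R U i f x) f x)"
    using insert by (intro blo_addop blo_scaleRop) auto
  then show ?case using insert by simp
qed

lemma blo_funpow:
  assumes "bounded_linear_op M S"
  shows "bounded_linear_op M (S ^^ n)"
proof (induction n)
  case 0 then show ?case using blo_id by (simp add: id_def)
next
  case (Suc n)
  have "bounded_linear_op M (\<lambda>f. S ((S ^^ n) f))" by (rule blo_comp[OF assms Suc])
  then show ?case by (simp add: comp_def)
qed

lemma le_lim_zero:
  fixes g :: "nat \<Rightarrow> real"
  assumes "g \<longlonglongrightarrow> 0" "\<And>N. x \<le> g N"
  shows "x \<le> 0"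
  using assms by (intro LIMSEQ_le_const[OF assms(1)]) auto

lemma l2norm_tri3:
  assumes "f \<in> L2m M" "g \<in> L2m M" "h \<in> L2m M" "k \<in> L2m M"
  shows "l2norm M (\<lambda>x. f x - k x) \<le> l2norm M (\<lambda>x. f x - g x) + l2norm M (\<lambda>x. g x - h x) + l2norm M (\<lambda>x. h x - k x)"
  using l2norm_triangle[OF assms(1,4,2)] l2norm_triangle[OF assms(2,4,3)] by linarith

lemma aeq_norm0: "f \<in> L2m M \<Longrightarrow> g \<in> L2m M \<Longrightarrow> aeq M f g \<Longrightarrow> l2norm M (\<lambda>x. f x - g x) = 0"
  using aeq_iff_norm by blast

lemma norm0_aeq: "f \<in> L2m M \<Longrightarrow> g \<in> L2m M \<Longrightarrow> l2norm M (\<lambda>x. f x - g x) \<le> 0 \<Longrightarrow> aeq M f g"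
  using aeq_iff_norm l2norm_nonneg by (metis order_antisym)

locale oplim =
  fixes M :: "'a measure" and P :: "nat \<Rightarrow> ('a \<Rightarrow> complex^'r::finite^'s::finite) \<Rightarrow> ('a \<Rightarrow> complex^'r^'s)"
    and tau :: "nat \<Rightarrow> real"
  assumes P_blo: "\<And>N. bounded_linear_op M (P N)"
    and tau_lim: "tau \<longlonglongrightarrow> 0"
    and tau_nonneg: "\<And>N. tau N \<ge> 0"
    and P_cauchy: "\<And>f N K. f \<in> L2m M \<Longrightarrow> N \<le> K \<Longrightarrow> l2norm M (\<lambda>x. P K f x - P N f x) \<le> tau N * l2norm M f"
begin

definition W where "W f = (SOME h. h \<in> L2m M \<and> (\<lambda>N. l2norm M (\<lambda>x. P N f x - h x)) \<longlonglongrightarrow> 0)"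

lemma PL: "f \<in> L2m M \<Longrightarrow> P N f \<in> L2m M"
  by (rule blo_L2[OF P_blo])

lemma tau_f: "(\<lambda>N. c * tau N) \<longlonglongrightarrow> 0"
  using tendsto_mult_left[OF tau_lim, of c] by simp

lemma W_ex:
  assumes f: "f \<in> L2m M"
  shows "W f \<in> L2m M \<and> (\<lambda>N. l2norm M (\<lambda>x. P N f x - W f x)) \<longlonglongrightarrow> 0"
proof -
  have "\<exists>h\<in>L2m M. (\<lambda>N. l2norm M (\<lambda>x. P N f x - h x)) \<longlonglongrightarrow> 0"
  proof (rule L2_complete)
    show "\<And>n. P n f \<in> L2m M" by (rule PL[OF f])
    fix e :: real assume e: "e > 0"
    have "(\<lambda>N. l2norm M f * tau N) \<longlonglongrightarrow> 0" by (rule tau_f)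
    then obtain N0 where N0: "\<And>N. N \<ge> N0 \<Longrightarrow> norm (l2norm M f * tau N - 0) < e"
      using LIMSEQ_D[OF _ e] by metis
    have "\<forall>m\<ge>N0. \<forall>n\<ge>N0. l2norm M (\<lambda>x. P m f x - P n f x) < e"
    proof (intro allI impI)
      fix m n assume m: "m \<ge> N0" and n: "n \<ge> N0"
      show "l2norm M (\<lambda>x. P m f x - P n f x) < e"
      proof (cases "n \<le> m")
        case True
        have "l2norm M (\<lambda>x. P m f x - P n f x) \<le> tau n * l2norm M f" by (rule P_cauchy[OF f True])
        also have "\<dots> < e" using N0[OF n] by (simp add: mult.commute)
        finally show ?thesis .
      next
        case False
        have "l2norm M (\<lambda>x. P m f x - P n f x) = l2norm M (\<lambda>x. P n f x - P m f x)"
          by (rule l2norm_minus_commute)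
        also have "\<dots> \<le> tau m * l2norm M f" using False by (intro P_cauchy[OF f]) auto
        also have "\<dots> < e" using N0[OF m] by (simp add: mult.commute)
        finally show ?thesis .
      qed
    qed
    then show "\<exists>N. \<forall>m\<ge>N. \<forall>n\<ge>N. l2norm M (\<lambda>x. P m f x - P n f x) < e" by blast
  qed
  then have "\<exists>h. h \<in> L2m M \<and> (\<lambda>N. l2norm M (\<lambda>x. P N f x - h x)) \<longlonglongrightarrow> 0" by blast
  then show ?thesis unfolding W_def by (rule someI_ex)
qed

lemma WL: "f \<in> L2m M \<Longrightarrow> W f \<in> L2m M"
  using W_ex by blast

lemma W_approx:
  assumes f: "f \<in> L2m M"
  shows "l2norm M (\<lambda>x. W f x - P N f x) \<le> tau N * l2norm M f"
proof -
  have lim: "(\<lambda>K. l2norm M (\<lambda>x. P K f x - W f x) + tau N * l2norm M f) \<longlonglongrightarrow> 0 + tau N * l2norm M f"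
    using W_ex[OF f] by (intro tendsto_add) auto
  have "\<forall>K\<ge>N. l2norm M (\<lambda>x. W f x - P N f x) \<le> l2norm M (\<lambda>x. P K f x - W f x) + tau N * l2norm M f"
  proof (intro allI impI)
    fix K assume K: "K \<ge> N"
    have "l2norm M (\<lambda>x. W f x - P N f x) \<le> l2norm M (\<lambda>x. W f x - P K f x) + l2norm M (\<lambda>x. P K f x - P N f x)"
      by (rule l2norm_triangle[OF WL[OF f] PL[OF f] PL[OF f]])
    also have "\<dots> \<le> l2norm M (\<lambda>x. P K f x - W f x) + tau N * l2norm M f"
      using P_cauchy[OF f K] by (simp add: l2norm_minus_commute[of M "W f"])
    finally show "l2norm M (\<lambda>x. W f x - P N f x) \<le> l2norm M (\<lambda>x. P K f x - W f x) + tau N * l2norm M f" .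
  qed
  then have "l2norm M (\<lambda>x. W f x - P N f x) \<le> 0 + tau N * l2norm M f"
    by (intro LIMSEQ_le_const[OF lim]) blast
  then show ?thesis by simp
qed

lemma W_approx':
  assumes f: "f \<in> L2m M"
  shows "l2norm M (\<lambda>x. P N f x - W f x) \<le> tau N * l2norm M f"
  using W_approx[OF f] by (simp add: l2norm_minus_commute[of M "P N f"])

lemma W_cong:
  assumes f: "f \<in> L2m M" and g: "g \<in> L2m M" and fg: "aeq M f g"
  shows "aeq M (W f) (W g)"
proof (rule norm0_aeq[OF WL[OF f] WL[OF g]])
  have "\<And>N. l2norm M (\<lambda>x. W f x - W g x) \<le> (l2norm M f + l2norm M g) * tau N"
  proof -
    fix N
    have "l2norm M (\<lambda>x. W f x - W g x) \<le> l2norm M (\<lambda>x. W f x - P N f x) + l2norm M (\<lambda>x. P N f x - P N g x)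
        + l2norm M (\<lambda>x. P N g x - W g x)"
      by (rule l2norm_tri3[OF WL[OF f] PL[OF f] PL[OF g] WL[OF g]])
    also have "l2norm M (\<lambda>x. P N f x - P N g x) = 0"
      by (rule aeq_norm0[OF PL[OF f] PL[OF g] blo_cong[OF P_blo f g fg]])
    finally show "l2norm M (\<lambda>x. W f x - W g x) \<le> (l2norm M f + l2norm M g) * tau N"
      using W_approx[OF f, of N] W_approx'[OF g, of N] by (simp add: algebra_simps)
  qed
  then show "l2norm M (\<lambda>x. W f x - W g x) \<le> 0"
    by (intro le_lim_zero[OF tau_f])
qed

lemma W_lin:
  assumes f: "f \<in> L2m M" and g: "g \<in> L2m M"
  shows "aeq M (W (\<lambda>x. cscale a (f x) + cscale b (g x))) (\<lambda>x. cscale a (W f x) + cscale b (W g x))"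
proof -
  let ?h = "\<lambda>x. cscale a (f x) + cscale b (g x)"
  have h: "?h \<in> L2m M" using f g by (intro L2m_add L2m_cscale)
  have r: "(\<lambda>x. cscale a (W f x) + cscale b (W g x)) \<in> L2m M"
    by (intro L2m_add L2m_cscale WL f g)
  have rN: "(\<lambda>x. cscale a (P N f x) + cscale b (P N g x)) \<in> L2m M" for N
    by (intro L2m_add L2m_cscale PL f g)
  show ?thesis
  proof (rule norm0_aeq[OF WL[OF h] r])
    have "\<And>N. l2norm M (\<lambda>x. W ?h x - (cscale a (W f x) + cscale b (W g x)))
        \<le> (l2norm M ?h + cmod a * l2norm M f + cmod b * l2norm M g) * tau N"
    proof -
      fix N
      have "l2norm M (\<lambda>x. W ?h x - (cscale a (W f x) + cscale b (W g x)))
          \<le> l2norm M (\<lambda>x. W ?h x - P N ?h x)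
           + l2norm M (\<lambda>x. P N ?h x - (cscale a (P N f x) + cscale b (P N g x)))
           + l2norm M (\<lambda>x. (cscale a (P N f x) + cscale b (P N g x)) - (cscale a (W f x) + cscale b (W g x)))"
        by (rule l2norm_tri3[OF WL[OF h] PL[OF h] rN r])
      also have "l2norm M (\<lambda>x. P N ?h x - (cscale a (P N f x) + cscale b (P N g x))) = 0"
        by (rule aeq_norm0[OF PL[OF h] rN blo_lin[OF P_blo f g]])
      also have "l2norm M (\<lambda>x. (cscale a (P N f x) + cscale b (P N g x)) - (cscale a (W f x) + cscale b (W g x)))
          = l2norm M (\<lambda>x. cscale a (P N f x - W f x) + cscale b (P N g x - W g x))"
        by (simp add: cscale_diff algebra_simps)
      also have "\<dots> \<le> l2norm M (\<lambda>x. cscale a (P N f x - W f x)) + l2norm M (\<lambda>x. cscale b (P N g x - W g x))"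
        by (intro l2norm_add L2m_cscale L2m_diff PL WL f g)
      also have "\<dots> = cmod a * l2norm M (\<lambda>x. P N f x - W f x) + cmod b * l2norm M (\<lambda>x. P N g x - W g x)"
        by (simp add: l2norm_cscale)
      finally have "l2norm M (\<lambda>x. W ?h x - (cscale a (W f x) + cscale b (W g x)))
          \<le> l2norm M (\<lambda>x. W ?h x - P N ?h x) + 0 + (cmod a * l2norm M (\<lambda>x. P N f x - W f x) + cmod b * l2norm M (\<lambda>x. P N g x - W g x))"
        by simp
      moreover have "cmod a * l2norm M (\<lambda>x. P N f x - W f x) \<le> cmod a * (tau N * l2norm M f)"
        using W_approx'[OF f, of N] by (intro mult_left_mono) auto
      moreover have "cmod b * l2norm M (\<lambda>x. P N g x - W g x) \<le> cmod b * (tau N * l2norm M g)"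
        using W_approx'[OF g, of N] by (intro mult_left_mono) auto
      ultimately show "l2norm M (\<lambda>x. W ?h x - (cscale a (W f x) + cscale b (W g x)))
        \<le> (l2norm M ?h + cmod a * l2norm M f + cmod b * l2norm M g) * tau N"
        using W_approx[OF h, of N] by (simp add: algebra_simps)
    qed
    then show "l2norm M (\<lambda>x. W ?h x - (cscale a (W f x) + cscale b (W g x))) \<le> 0"
      by (intro le_lim_zero[OF tau_f])
  qed
qed

lemma W_blo: "bounded_linear_op M W"
  unfolding bounded_linear_op_def
proof (intro conjI ballI allI impI)
  fix f :: "'a \<Rightarrow> complex^'r^'s" assume f: "f \<in> L2m M"
  show "W f \<in> L2m M" by (rule WL[OF f])
next
  fix f g :: "'a \<Rightarrow> complex^'r^'s" and a b
  assume f: "f \<in> L2m M" and g: "g \<in> L2m M"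
  show "aeq M (W (\<lambda>x. cscale a (f x) + cscale b (g x))) (\<lambda>x. cscale a (W f x) + cscale b (W g x))"
    by (rule W_lin[OF f g])
next
  fix f g :: "'a \<Rightarrow> complex^'r^'s"
  assume f: "f \<in> L2m M" and g: "g \<in> L2m M" and "aeq M f g"
  then show "aeq M (W f) (W g)" by (rule W_cong)
next
  obtain C where C: "C > 0" "\<forall>f\<in>L2m M. l2norm M (P 0 f) \<le> C * l2norm M f"
    using blo_bound[OF P_blo[of 0]] by auto
  have "\<forall>f\<in>L2m M. l2norm M (W f) \<le> (tau 0 + C) * l2norm M f"
  proof
    fix f :: "'a \<Rightarrow> complex^'r^'s" assume f: "f \<in> L2m M"
    have "l2norm M (W f) = l2norm M (\<lambda>x. (W f x - P 0 f x) + P 0 f x)" by simp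
    also have "\<dots> \<le> l2norm M (\<lambda>x. W f x - P 0 f x) + l2norm M (P 0 f)"
      by (rule l2norm_add[OF L2m_diff[OF WL[OF f] PL[OF f]] PL[OF f]])
    also have "\<dots> \<le> tau 0 * l2norm M f + C * l2norm M f"
      using W_approx[OF f, of 0] C f by (intro add_mono) auto
    finally show "l2norm M (W f) \<le> (tau 0 + C) * l2norm M f" by (simp add: algebra_simps)
  qed
  then show "\<exists>C. \<forall>f\<in>L2m M. l2norm M (W f) \<le> C * l2norm M f" by blast
qed

lemma W_lmult:
  assumes lm: "\<And>N f. f \<in> L2m M \<Longrightarrow> aeq M (P N (\<lambda>x. X ** f x)) (\<lambda>x. X ** P N f x)"
    and f: "f \<in> L2m M"
  shows "aeq M (W (\<lambda>x. X ** f x)) (\<lambda>x. X ** W f x)"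
proof -
  obtain K where K: "K \<ge> 0" "\<forall>f\<in>(L2m M :: ('a \<Rightarrow> complex^'r^'s) set). l2norm M (\<lambda>x. X ** f x) \<le> K * l2norm M f"
    using l2norm_lmult[where X=X and M=M] by auto
  have Xf: "(\<lambda>x. X ** f x) \<in> L2m M" by (rule L2m_lmult[OF f])
  have XW: "(\<lambda>x. X ** W f x) \<in> L2m M" by (rule L2m_lmult[OF WL[OF f]])
  have XP: "(\<lambda>x. X ** P N f x) \<in> L2m M" for N by (rule L2m_lmult[OF PL[OF f]])
  show ?thesis
  proof (rule norm0_aeq[OF WL[OF Xf] XW])
    have "\<And>N. l2norm M (\<lambda>x. W (\<lambda>x. X ** f x) x - X ** W f x) \<le> (l2norm M (\<lambda>x. X ** f x) + K * l2norm M f) * tau N"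
    proof -
      fix N
      have "l2norm M (\<lambda>x. W (\<lambda>x. X ** f x) x - X ** W f x)
          \<le> l2norm M (\<lambda>x. W (\<lambda>x. X ** f x) x - P N (\<lambda>x. X ** f x) x)
           + l2norm M (\<lambda>x. P N (\<lambda>x. X ** f x) x - X ** P N f x)
           + l2norm M (\<lambda>x. X ** P N f x - X ** W f x)"
        by (rule l2norm_tri3[OF WL[OF Xf] PL[OF Xf] XP XW])
      also have "l2norm M (\<lambda>x. P N (\<lambda>x. X ** f x) x - X ** P N f x) = 0"
        by (rule aeq_norm0[OF PL[OF Xf] XP lm[OF f]])
      also have "l2norm M (\<lambda>x. X ** P N f x - X ** W f x) = l2norm M (\<lambda>x. X ** (P N f x - W f x))"
        by (simp add: mult_diff)
      also have "\<dots> \<le> K * l2norm M (\<lambda>x. P N f x - W f x)"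
        using K L2m_diff[OF PL[OF f] WL[OF f]] by auto
      also have "\<dots> \<le> K * (tau N * l2norm M f)"
        using W_approx'[OF f, of N] K by (intro mult_left_mono) auto
      finally show "l2norm M (\<lambda>x. W (\<lambda>x. X ** f x) x - X ** W f x) \<le> (l2norm M (\<lambda>x. X ** f x) + K * l2norm M f) * tau N"
        using W_approx[OF Xf, of N] by (simp add: algebra_simps)
    qed
    then show "l2norm M (\<lambda>x. W (\<lambda>x. X ** f x) x - X ** W f x) \<le> 0"
      by (intro le_lim_zero[OF tau_f])
  qed
qed

lemma W_comm:
  assumes B: "bounded_linear_op M B"
    and cm: "\<And>N f. f \<in> L2m M \<Longrightarrow> aeq M (B (P N f)) (P N (B f))"
    and f: "f \<in> L2m M"
  shows "aeq M (B (W f)) (W (B f))"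
proof -
  obtain C where C: "C > 0" "\<forall>f\<in>L2m M. l2norm M (B f) \<le> C * l2norm M f"
    using blo_bound[OF B] by auto
  have Bf: "B f \<in> L2m M" by (rule blo_L2[OF B f])
  have BW: "B (W f) \<in> L2m M" by (rule blo_L2[OF B WL[OF f]])
  have BP: "B (P N f) \<in> L2m M" for N by (rule blo_L2[OF B PL[OF f]])
  show ?thesis
  proof (rule norm0_aeq[OF BW WL[OF Bf]])
    have "\<And>N. l2norm M (\<lambda>x. B (W f) x - W (B f) x) \<le> (C * l2norm M f + l2norm M (B f)) * tau N"
    proof -
      fix N
      have "l2norm M (\<lambda>x. B (W f) x - W (B f) x)
          \<le> l2norm M (\<lambda>x. B (W f) x - B (P N f) x) + l2norm M (\<lambda>x. B (P N f) x - P N (B f) x)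
           + l2norm M (\<lambda>x. P N (B f) x - W (B f) x)"
        by (rule l2norm_tri3[OF BW BP PL[OF Bf] WL[OF Bf]])
      also have "l2norm M (\<lambda>x. B (P N f) x - P N (B f) x) = 0"
        by (rule aeq_norm0[OF BP PL[OF Bf] cm[OF f]])
      also have "l2norm M (\<lambda>x. B (W f) x - B (P N f) x) \<le> C * l2norm M (\<lambda>x. W f x - P N f x)"
        by (rule blo_dist[OF B C(2) WL[OF f] PL[OF f]])
      also have "\<dots> \<le> C * (tau N * l2norm M f)"
        using W_approx[OF f, of N] C by (intro mult_left_mono) auto
      finally show "l2norm M (\<lambda>x. B (W f) x - W (B f) x) \<le> (C * l2norm M f + l2norm M (B f)) * tau N"
        using W_approx'[OF Bf, of N] by (simp add: algebra_simps)
    qed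
    then show "l2norm M (\<lambda>x. B (W f) x - W (B f) x) \<le> 0"
      by (intro le_lim_zero[OF tau_f])
  qed
qed

lemma W_sym:
  assumes sy: "\<And>N f g. f \<in> L2m M \<Longrightarrow> g \<in> L2m M \<Longrightarrow> sip M (P N f) g = sip M f (P N g)"
    and f: "f \<in> L2m M" and g: "g \<in> L2m M"
  shows "sip M (W f) g = sip M f (W g)"
proof -
  have "\<And>N. cmod (sip M (W f) g - sip M f (W g)) \<le> (2 * l2norm M f * l2norm M g) * tau N"
  proof -
    fix N
    have "sip M (W f) g - sip M f (W g) = sip M (\<lambda>x. W f x - P N f x) g + sip M f (\<lambda>x. P N g x - W g x)"
      using sy[OF f g, of N]
      by (simp add: sip_diff_left sip_diff_right WL PL f g)
    then have "cmod (sip M (W f) g - sip M f (W g))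
        \<le> cmod (sip M (\<lambda>x. W f x - P N f x) g) + cmod (sip M f (\<lambda>x. P N g x - W g x))"
      by (simp add: norm_triangle_ineq)
    also have "\<dots> \<le> l2norm M (\<lambda>x. W f x - P N f x) * l2norm M g + l2norm M f * l2norm M (\<lambda>x. P N g x - W g x)"
      by (intro add_mono sip_CS L2m_diff WL PL f g)
    also have "\<dots> \<le> (tau N * l2norm M f) * l2norm M g + l2norm M f * (tau N * l2norm M g)"
      using W_approx[OF f, of N] W_approx'[OF g, of N]
      by (intro add_mono mult_right_mono mult_left_mono) (auto simp: l2norm_nonneg)
    finally show "cmod (sip M (W f) g - sip M f (W g)) \<le> (2 * l2norm M f * l2norm M g) * tau N"
      by (simp add: algebra_simps)
  qed
  then have "cmod (sip M (W f) g - sip M f (W g)) \<le> 0"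
    by (intro le_lim_zero[OF tau_f])
  then show ?thesis by simp
qed

lemma W_pos:
  assumes ps: "\<And>N f. f \<in> L2m M \<Longrightarrow> 0 \<le> Re (sip M (P N f) f)"
    and f: "f \<in> L2m M"
  shows "0 \<le> Re (sip M (W f) f)"
proof -
  have "\<And>N. - Re (sip M (W f) f) \<le> (l2norm M f * l2norm M f) * tau N"
  proof -
    fix N
    have "sip M (W f) f = sip M (P N f) f + sip M (\<lambda>x. W f x - P N f x) f"
      by (simp add: sip_diff_left WL PL f)
    then have "Re (sip M (W f) f) \<ge> Re (sip M (P N f) f) - cmod (sip M (\<lambda>x. W f x - P N f x) f)"
      using abs_Re_le_cmod[of "sip M (\<lambda>x. W f x - P N f x) f"] by simp
    moreover have "cmod (sip M (\<lambda>x. W f x - P N f x) f) \<le> (tau N * l2norm M f) * l2norm M f"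
      using sip_CS[OF L2m_diff[OF WL[OF f] PL[OF f]] f] W_approx[OF f, of N]
      by (meson l2norm_nonneg mult_right_mono order_trans)
    ultimately show "- Re (sip M (W f) f) \<le> (l2norm M f * l2norm M f) * tau N"
      using ps[OF f, of N] by (simp add: algebra_simps)
  qed
  then have "- Re (sip M (W f) f) \<le> 0" by (intro le_lim_zero[OF tau_f])
  then show ?thesis by simp
qed

end

lemma quad_disc:
  fixes a b c :: real
  assumes c: "c \<ge> 0" and q: "\<And>t. 0 \<le> a + 2*b*t + c*t\<^sup>2"
  shows "b\<^sup>2 \<le> a*c"
proof (cases "c = 0")
  case True
  show ?thesis
  proof (cases "b = 0")
    case True then show ?thesis using q[of 0] c by simp
  next
    case False
    have "0 \<le> a + 2*b*(-(a+1)/(2*b)) + c*(-(a+1)/(2*b))\<^sup>2" by (rule q)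
    then have "0 \<le> a - (a + 1)" using False \<open>c = 0\<close> by (simp add: field_simps)
    then show ?thesis by simp
  qed
next
  case False
  then have c0: "c > 0" using c by simp
  have "0 \<le> a + 2*b*(-b/c) + c*(-b/c)\<^sup>2" by (rule q)
  also have "a + 2*b*(-b/c) + c*(-b/c)\<^sup>2 = a - b\<^sup>2/c" using c0 by (simp add: field_simps power2_eq_square)
  finally have "b\<^sup>2/c \<le> a" by simp
  then show ?thesis using c0 by (simp add: field_simps)
qed

lemma pos_blo: "positive_op M U \<Longrightarrow> bounded_linear_op M U"
  by (simp add: positive_op_def)

lemma pos_sym: "positive_op M U \<Longrightarrow> f \<in> L2m M \<Longrightarrow> g \<in> L2m M \<Longrightarrow> sip M (U f) g = sip M f (U g)"
  by (simp add: positive_op_def)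

lemma pos_re: "positive_op M U \<Longrightarrow> f \<in> L2m M \<Longrightarrow> 0 \<le> Re (sip M (U f) f)"
  unfolding positive_op_def by blast

lemma pos_im: "positive_op M U \<Longrightarrow> f \<in> L2m M \<Longrightarrow> Im (sip M (U f) f) = 0"
  unfolding positive_op_def by blast

lemma sip_sum_right:
  assumes "\<And>i. i \<in> I \<Longrightarrow> F i \<in> L2m M" "g \<in> L2m M"
  shows "sip M g (\<lambda>x. \<Sum>i\<in>I. F i x) = (\<Sum>i\<in>I. sip M g (F i))"
proof -
  have "sip M g (\<lambda>x. \<Sum>i\<in>I. F i x) = cnj (sip M (\<lambda>x. \<Sum>i\<in>I. F i x) g)"
    using assms by (simp add: sip_commute[of _ M g] L2m_sum)
  also have "\<dots> = cnj (\<Sum>i\<in>I. sip M (F i) g)" using assms by (simp add: sip_sum_left)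
  also have "\<dots> = (\<Sum>i\<in>I. sip M g (F i))" using assms by (simp add: cnj_sum sip_commute[of g M])
  finally show ?thesis .
qed

lemma pos_formCS:
  fixes U :: "('a \<Rightarrow> complex^'r::finite^'s::finite) \<Rightarrow> ('a \<Rightarrow> complex^'r^'s)"
  assumes P: "positive_op M U" and f: "f \<in> L2m M" and g: "g \<in> L2m M"
  shows "(cmod (sip M (U f) g))\<^sup>2 \<le> Re (sip M (U f) f) * Re (sip M (U g) g)"
proof (cases "sip M (U f) g = 0")
  case True
  then show ?thesis using pos_re[OF P f] pos_re[OF P g] by simp
next
  case False
  have U: "bounded_linear_op M U" by (rule pos_blo[OF P])
  define s where "s = sip M (U f) g"
  define w where "w = s / of_real (cmod s)"
  have s0: "s \<noteq> 0" using False by (simp add: s_def)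
  have ww: "w * cnj w = 1" using s0
    by (simp add: w_def complex_norm_square[symmetric] power2_eq_square)
  have ws: "cnj w * s = of_real (cmod s)"
  proof -
    have "cnj s * s = of_real ((cmod s)\<^sup>2)" using complex_norm_square[of s] by (simp add: mult.commute)
    then show ?thesis using s0 by (simp add: w_def power2_eq_square)
  qed
  define g' where "g' = (\<lambda>x. cscale w (g x))"
  have g': "g' \<in> L2m M" unfolding g'_def by (rule L2m_cscale[OF g])
  have Uf: "U f \<in> L2m M" by (rule blo_L2[OF U f])
  have Ug': "U g' \<in> L2m M" by (rule blo_L2[OF U g'])
  have Ug: "U g \<in> L2m M" by (rule blo_L2[OF U g])
  have e1: "sip M (U f) g' = of_real (cmod s)"
    unfolding g'_def using Uf g ws by (simp add: sip_cscale_right s_def)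
  have e2: "Re (sip M (U g') f) = cmod s"
  proof -
    have "sip M (U g') f = sip M g' (U f)" by (rule pos_sym[OF P g' f])
    also have "\<dots> = cnj (sip M (U f) g')" by (rule sip_commute[OF Uf g'])
    finally show ?thesis using e1 by simp
  qed
  have e3: "sip M (U g') g' = sip M (U g) g"
  proof -
    have a1: "aeq M (U g') (\<lambda>x. cscale w (U g x))" unfolding g'_def by (rule blo_cscale[OF U g])
    have "sip M (U g') g' = sip M (\<lambda>x. cscale w (U g x)) g'"
      by (rule sip_cong[OF Ug' g' L2m_cscale[OF Ug] g' a1 aeq_refl])
    also have "\<dots> = w * cnj w * sip M (U g) g"
      unfolding g'_def using Ug g by (simp add: sip_cscale_left sip_cscale_right L2m_cscale)
    finally show ?thesis using ww by simp
  qed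
  have quad: "0 \<le> Re (sip M (U f) f) + 2 * cmod s * t + Re (sip M (U g) g) * t\<^sup>2" for t
  proof -
    define h where "h = (\<lambda>x. f x + t *\<^sub>R g' x)"
    have h: "h \<in> L2m M" unfolding h_def by (intro L2m_add L2m_scaleR f g')
    have tg': "(\<lambda>x. t *\<^sub>R g' x) \<in> L2m M" by (rule L2m_scaleR[OF g'])
    have tUg': "(\<lambda>x. t *\<^sub>R U g' x) \<in> L2m M" by (rule L2m_scaleR[OF Ug'])
    have Uh: "aeq M (U h) (\<lambda>x. U f x + t *\<^sub>R U g' x)"
    proof -
      have "aeq M (U h) (\<lambda>x. U f x + U (\<lambda>x. t *\<^sub>R g' x) x)"
        unfolding h_def by (rule blo_add[OF U f tg'])
      also have "aeq M \<dots> (\<lambda>x. U f x + t *\<^sub>R U g' x)"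
        by (rule aeq_add[OF aeq_refl blo_scaleR[OF U g']])
      finally show ?thesis .
    qed
    have "sip M (U h) h = sip M (\<lambda>x. U f x + t *\<^sub>R U g' x) h"
      by (rule sip_cong[OF blo_L2[OF U h] h L2m_add[OF Uf tUg'] h Uh aeq_refl])
    also have "\<dots> = sip M (U f) f + of_real t * sip M (U f) g' + of_real t * sip M (U g') f
        + of_real t * of_real t * sip M (U g') g'"
      unfolding h_def using Uf Ug' f g' tg' tUg'
      by (simp add: sip_add_left sip_add_right sip_scaleR_left sip_scaleR_right L2m_add L2m_scaleR algebra_simps)
    finally have "Re (sip M (U h) h) = Re (sip M (U f) f) + 2 * cmod s * t + Re (sip M (U g) g) * t\<^sup>2"
      using e1 e2 e3 by (simp add: power2_eq_square algebra_simps)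
    then show ?thesis using pos_re[OF P h] by simp
  qed
  have "(cmod s)\<^sup>2 \<le> Re (sip M (U f) f) * Re (sip M (U g) g)"
    by (rule quad_disc[OF pos_re[OF P g]]) (use quad in \<open>simp add: mult.commute\<close>)
  then show ?thesis by (simp add: s_def)
qed

lemma mat_eq_trace:
  fixes A B :: "complex^'s^'s"
  assumes "\<And>Y. mtrace (Y ** A) = mtrace (Y ** B)"
  shows "A = B"
proof -
  have "A $ a $ b = B $ a $ b" for a b
  proof -
    define Y :: "complex^'s^'s" where "Y = (\<chi> i j. if i = b \<and> j = a then 1 else 0)"
    have gen: "mtrace (Y ** C) = C $ a $ b" for C :: "complex^'s^'s"
    proof -
      have "mtrace (Y ** C) = (\<Sum>i\<in>UNIV. \<Sum>k\<in>UNIV. Y $ i $ k * C $ k $ i)"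
        by (simp add: mtrace_def matrix_matrix_mult_def)
      also have "\<dots> = (\<Sum>i\<in>UNIV. if i = b then C $ a $ i else 0)"
      proof (rule sum.cong)
        fix i :: 's
        show "(\<Sum>k\<in>UNIV. Y $ i $ k * C $ k $ i) = (if i = b then C $ a $ i else 0)"
        proof (cases "i = b")
          case True
          have "(\<Sum>k\<in>UNIV. Y $ i $ k * C $ k $ i) = (\<Sum>k\<in>UNIV. if k = a then C $ k $ i else 0)"
            by (rule sum.cong) (auto simp: Y_def True)
          then show ?thesis using True by simp
        next
          case False
          then show ?thesis by (simp add: Y_def)
        qed
      qed simp
      also have "\<dots> = C $ a $ b" by simp
      finally show ?thesis .
    qed
    have "mtrace (Y ** A) = A $ a $ b" by (rule gen)
    moreover have "mtrace (Y ** B) = B $ a $ b" by (rule gen)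
    ultimately show ?thesis using assms by metis
  qed
  then show ?thesis by (simp add: vec_eq_iff)
qed

lemma le_lim_zero_ev:
  fixes g :: "nat \<Rightarrow> real"
  assumes "g \<longlonglongrightarrow> 0" "\<And>N. N \<ge> N0 \<Longrightarrow> x \<le> g N"
  shows "x \<le> 0"
  by (rule LIMSEQ_le_const[OF assms(1)]) (use assms(2) in blast)

locale sqsetup =
  fixes M :: "'a measure" and T :: "('a \<Rightarrow> complex^'r::finite^'s::finite) \<Rightarrow> ('a \<Rightarrow> complex^'r^'s)"
  assumes Tpos: "positive_op M T" and Tadj: "adjointable_op M T"
begin

lemma Tblo: "bounded_linear_op M T" by (rule pos_blo[OF Tpos])

lemma TL: "f \<in> L2m M \<Longrightarrow> T f \<in> L2m M" by (rule blo_L2[OF Tblo])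

definition CT where "CT = (SOME C. C > 0 \<and> (\<forall>f\<in>L2m M. l2norm M (T f) \<le> C * l2norm M f))"

lemma CT: "CT > 0 \<and> (\<forall>f\<in>L2m M. l2norm M (T f) \<le> CT * l2norm M f)"
  unfolding CT_def by (rule someI_ex) (rule blo_bound[OF Tblo])

lemma CT_pos: "CT > 0" using CT by blast
lemma CT_bound: "f \<in> L2m M \<Longrightarrow> l2norm M (T f) \<le> CT * l2norm M f" using CT by blast

lemma T_lmult:
  assumes f: "f \<in> L2m M"
  shows "aeq M (T (\<lambda>x. X ** f x)) (\<lambda>x. X ** T f x)"
proof -
  obtain V where V: "bounded_linear_op M V"
    and mV: "\<And>h g. h \<in> L2m M \<Longrightarrow> g \<in> L2m M \<Longrightarrow> mip M (T h) g = mip M h (V g)"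
    using Tadj unfolding adjointable_op_def by blast
  have Xf: "(\<lambda>x. X ** f x) \<in> L2m M" by (rule L2m_lmult[OF f])
  have TXf: "T (\<lambda>x. X ** f x) \<in> L2m M" by (rule TL[OF Xf])
  have XTf: "(\<lambda>x. X ** T f x) \<in> L2m M" by (rule L2m_lmult[OF TL[OF f]])
  have key: "sip M (T (\<lambda>x. X ** f x)) g = sip M (\<lambda>x. X ** T f x) g" if g: "g \<in> L2m M" for g
  proof -
    have "sip M (T (\<lambda>x. X ** f x)) g = mtrace (mip M (T (\<lambda>x. X ** f x)) g)" by (simp add: sip_def)
    also have "\<dots> = mtrace (mip M (\<lambda>x. X ** f x) (V g))" by (simp add: mV[OF Xf g])
    also have "\<dots> = sip M (\<lambda>x. X ** f x) (V g)" by (simp add: sip_def)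
    also have "\<dots> = mtrace (X ** mip M f (V g))" by (rule sip_lmult[OF f blo_L2[OF V g]])
    also have "\<dots> = mtrace (X ** mip M (T f) g)" by (simp add: mV[OF f g])
    also have "\<dots> = sip M (\<lambda>x. X ** T f x) g" by (rule sip_lmult[OF TL[OF f] g, symmetric])
    finally show ?thesis .
  qed
  define d where "d = (\<lambda>x. T (\<lambda>x. X ** f x) x - X ** T f x)"
  have d: "d \<in> L2m M" unfolding d_def by (rule L2m_diff[OF TXf XTf])
  have "sip M d d = sip M (T (\<lambda>x. X ** f x)) d - sip M (\<lambda>x. X ** T f x) d"
    unfolding d_def by (rule sip_diff_left[OF TXf XTf d[unfolded d_def]])
  also have "\<dots> = 0" using key[OF d] by simp
  finally have "sip M d d = 0" .
  then have "(l2norm M d)\<^sup>2 = 0" using sip_self[OF d] by simp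
  then show ?thesis using aeq_iff_norm[OF TXf XTf] by (simp add: d_def)
qed

definition S where "S f = (\<lambda>x. f x - (1/CT) *\<^sub>R T f x)"

lemma S_blo: "bounded_linear_op M S"
  unfolding S_def by (rule blo_diffop[OF blo_id blo_scaleRop[OF Tblo]])

lemma SL: "f \<in> L2m M \<Longrightarrow> S f \<in> L2m M" by (rule blo_L2[OF S_blo])

lemma S_sym:
  assumes f: "f \<in> L2m M" and g: "g \<in> L2m M"
  shows "sip M (S f) g = sip M f (S g)"
  unfolding S_def using f g TL[OF f] TL[OF g] pos_sym[OF Tpos f g]
  by (simp add: sip_diff_left sip_diff_right sip_scaleR_left sip_scaleR_right L2m_scaleR)

lemma S_lmult:
  assumes f: "f \<in> L2m M"
  shows "aeq M (S (\<lambda>x. X ** f x)) (\<lambda>x. X ** S f x)"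
proof -
  have "aeq M (\<lambda>x. X ** f x - (1/CT) *\<^sub>R T (\<lambda>x. X ** f x) x) (\<lambda>x. X ** f x - (1/CT) *\<^sub>R (X ** T f x))"
    by (rule aeq_diff[OF aeq_refl aeq_scaleR[OF T_lmult[OF f]]])
  then show ?thesis unfolding S_def
    by (rule aeq_eq_trans) (simp add: mult_diff mult_scaleR)
qed

lemma T_sq_bound:
  assumes f: "f \<in> L2m M"
  shows "(l2norm M (T f))\<^sup>2 \<le> CT * Re (sip M (T f) f)"
proof -
  define p where "p = Re (sip M (T f) f)"
  define n where "n = l2norm M (T f)"
  have Tf: "T f \<in> L2m M" by (rule TL[OF f])
  have p0: "p \<ge> 0" unfolding p_def by (rule pos_re[OF Tpos f])
  have cs: "(cmod (sip M (T f) (T f)))\<^sup>2 \<le> p * Re (sip M (T (T f)) (T f))"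
    unfolding p_def by (rule pos_formCS[OF Tpos f Tf])
  have e: "cmod (sip M (T f) (T f)) = n\<^sup>2" using sip_self[OF Tf] by (simp add: n_def del: of_real_power)
  have "Re (sip M (T (T f)) (T f)) \<le> cmod (sip M (T (T f)) (T f))" by (rule complex_Re_le_cmod)
  also have "\<dots> \<le> l2norm M (T (T f)) * l2norm M (T f)" by (rule sip_CS[OF TL[OF Tf] Tf])
  also have "\<dots> \<le> (CT * n) * n" unfolding n_def
    by (rule mult_right_mono[OF CT_bound[OF Tf] l2norm_nonneg])
  finally have r: "Re (sip M (T (T f)) (T f)) \<le> CT * n\<^sup>2" by (simp add: power2_eq_square)
  have "n\<^sup>2 * n\<^sup>2 \<le> p * (CT * n\<^sup>2)"
    using cs e r p0 by (metis mult_left_mono order_trans power2_eq_square)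
  then have h: "n\<^sup>2 * n\<^sup>2 \<le> (CT * p) * n\<^sup>2" by (simp add: algebra_simps)
  have "n\<^sup>2 \<le> CT * p \<or> n = 0"
  proof (cases "n = 0")
    case False
    then have "n\<^sup>2 > 0" by simp
    then show ?thesis using h mult_le_cancel_right_pos by blast
  qed simp
  then show ?thesis using p0 CT_pos by (auto simp: n_def p_def)
qed

lemma S_norm:
  assumes f: "f \<in> L2m M"
  shows "l2norm M (S f) \<le> l2norm M f"
proof -
  define c where "c = 1 / CT"
  define p where "p = Re (sip M (T f) f)"
  have Tf: "T f \<in> L2m M" by (rule TL[OF f])
  have cTf: "(\<lambda>x. c *\<^sub>R T f x) \<in> L2m M" by (rule L2m_scaleR[OF Tf])
  have c0: "c > 0" using CT_pos by (simp add: c_def)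
  have p0: "p \<ge> 0" unfolding p_def by (rule pos_re[OF Tpos f])
  have Re1: "Re (sip M f (T f)) = p"
    unfolding p_def using sip_commute[OF Tf f] by simp
  have "(l2norm M (S f))\<^sup>2 = Re (sip M (S f) (S f))" by (simp add: Re_sip_self[OF SL[OF f]])
  also have "sip M (S f) (S f) = sip M f f - of_real c * sip M f (T f) - of_real c * sip M (T f) f
      + of_real c * of_real c * sip M (T f) (T f)"
    unfolding S_def c_def[symmetric] using f Tf cTf
    by (simp add: sip_diff_left sip_diff_right sip_scaleR_left sip_scaleR_right L2m_diff algebra_simps)
  finally have "(l2norm M (S f))\<^sup>2 = (l2norm M f)\<^sup>2 - 2 * c * p + c * c * (l2norm M (T f))\<^sup>2"
    using Re1 Re_sip_self[OF f] Re_sip_self[OF Tf] by (simp add: p_def)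
  also have "\<dots> \<le> (l2norm M f)\<^sup>2 - 2 * c * p + c * c * (CT * p)"
    using T_sq_bound[OF f] c0 by (simp add: p_def mult_left_mono)
  also have "c * c * (CT * p) = c * p" using CT_pos by (simp add: c_def)
  finally have "(l2norm M (S f))\<^sup>2 \<le> (l2norm M f)\<^sup>2 - c * p" by simp
  then have "(l2norm M (S f))\<^sup>2 \<le> (l2norm M f)\<^sup>2" using mult_nonneg_nonneg[of c p] c0 p0 by linarith
  then show ?thesis by (rule power2_le_imp_le) (simp add: l2norm_nonneg)
qed

lemma Sn_blo: "bounded_linear_op M (S ^^ n)" by (rule blo_funpow[OF S_blo])

lemma SnL: "f \<in> L2m M \<Longrightarrow> (S ^^ n) f \<in> L2m M" by (rule blo_L2[OF Sn_blo])

lemma Sn_norm: "f \<in> L2m M \<Longrightarrow> l2norm M ((S ^^ n) f) \<le> l2norm M f"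
proof (induction n)
  case 0 then show ?case by simp
next
  case (Suc n)
  have "l2norm M ((S ^^ Suc n) f) = l2norm M (S ((S ^^ n) f))" by simp
  also have "\<dots> \<le> l2norm M ((S ^^ n) f)" by (rule S_norm[OF SnL[OF Suc.prems]])
  finally show ?case using Suc by simp
qed

lemma Sn_sym: "f \<in> L2m M \<Longrightarrow> g \<in> L2m M \<Longrightarrow> sip M ((S ^^ n) f) g = sip M f ((S ^^ n) g)"
proof (induction n arbitrary: g)
  case 0 then show ?case by simp
next
  case (Suc n)
  have "sip M ((S ^^ Suc n) f) g = sip M (S ((S ^^ n) f)) g" by simp
  also have "\<dots> = sip M ((S ^^ n) f) (S g)" by (rule S_sym[OF SnL[OF Suc.prems(1)] Suc.prems(2)])
  also have "\<dots> = sip M f ((S ^^ n) (S g))" by (rule Suc.IH[OF Suc.prems(1) SL[OF Suc.prems(2)]])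
  also have "(S ^^ n) (S g) = (S ^^ Suc n) g" by (simp add: funpow_Suc_right del: funpow.simps)
  finally show ?case .
qed

lemma Sn_lmult: "f \<in> L2m M \<Longrightarrow> aeq M ((S ^^ n) (\<lambda>x. X ** f x)) (\<lambda>x. X ** (S ^^ n) f x)"
proof (induction n)
  case 0 then show ?case by (simp add: aeq_refl)
next
  case (Suc n)
  have "aeq M ((S ^^ Suc n) (\<lambda>x. X ** f x)) (S (\<lambda>x. X ** (S ^^ n) f x))"
    using blo_cong[OF S_blo SnL[OF L2m_lmult[OF Suc.prems]] L2m_lmult[OF SnL[OF Suc.prems]] Suc.IH[OF Suc.prems]]
    by simp
  also have "aeq M \<dots> (\<lambda>x. X ** S ((S ^^ n) f) x)" by (rule S_lmult[OF SnL[OF Suc.prems]])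
  finally show ?case by simp
qed

lemma Sn_comm:
  assumes B: "bounded_linear_op M B" and BS: "\<And>f. f \<in> L2m M \<Longrightarrow> aeq M (B (S f)) (S (B f))"
  shows "f \<in> L2m M \<Longrightarrow> aeq M (B ((S ^^ n) f)) ((S ^^ n) (B f))"
proof (induction n)
  case 0 then show ?case by (simp add: aeq_refl)
next
  case (Suc n)
  have "aeq M (B ((S ^^ Suc n) f)) (S (B ((S ^^ n) f)))"
    using BS[OF SnL[OF Suc.prems]] by simp
  also have "aeq M \<dots> (S ((S ^^ n) (B f)))"
    by (rule blo_cong[OF S_blo blo_L2[OF B SnL[OF Suc.prems]] SnL[OF blo_L2[OF B Suc.prems]] Suc.IH[OF Suc.prems]])
  finally show ?case by simp
qed

end

context sqsetup begin

definition Ps where "Ps N f = (\<lambda>x. \<Sum>n<N. acoef n *\<^sub>R (S ^^ n) f x)"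
definition Aa where "Aa = (\<Sum>n. \<bar>acoef n\<bar>)"
definition tau where "tau N = Aa - (\<Sum>n<N. \<bar>acoef n\<bar>)"

lemma Ps_blo: "bounded_linear_op M (Ps N)"
  unfolding Ps_def by (rule blo_sumop[OF finite_lessThan Sn_blo])

lemma PsL: "f \<in> L2m M \<Longrightarrow> Ps N f \<in> L2m M" by (rule blo_L2[OF Ps_blo])

lemma sum_Sn_norm:
  assumes f: "f \<in> L2m M" and I: "finite I"
  shows "l2norm M (\<lambda>x. \<Sum>i\<in>I. c i *\<^sub>R (S ^^ k i) f x) \<le> (\<Sum>i\<in>I. \<bar>c i\<bar>) * l2norm M f"
  using I
proof (induction I rule: finite_induct)
  case empty then show ?case by (simp add: l2norm_def)
next
  case (insert a A)
  have "l2norm M (\<lambda>x. \<Sum>i\<in>insert a A. c i *\<^sub>R (S ^^ k i) f x)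
      = l2norm M (\<lambda>x. c a *\<^sub>R (S ^^ k a) f x + (\<Sum>i\<in>A. c i *\<^sub>R (S ^^ k i) f x))"
    using insert by simp
  also have "\<dots> \<le> l2norm M (\<lambda>x. c a *\<^sub>R (S ^^ k a) f x) + l2norm M (\<lambda>x. \<Sum>i\<in>A. c i *\<^sub>R (S ^^ k i) f x)"
    by (intro l2norm_add L2m_scaleR L2m_sum SnL f)
  also have "\<dots> \<le> \<bar>c a\<bar> * l2norm M f + (\<Sum>i\<in>A. \<bar>c i\<bar>) * l2norm M f"
    using Sn_norm[OF f, of "k a"] insert.IH
    by (intro add_mono) (auto simp: l2norm_scaleR mult_left_mono)
  finally show ?case using insert by (simp add: algebra_simps)
qed

lemma tau_lim: "tau \<longlonglongrightarrow> 0"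
proof -
  have "(\<lambda>N. \<Sum>n<N. \<bar>acoef n\<bar>) \<longlonglongrightarrow> Aa" unfolding Aa_def by (rule summable_LIMSEQ[OF summable_acoef])
  then have "(\<lambda>N. Aa - (\<Sum>n<N. \<bar>acoef n\<bar>)) \<longlonglongrightarrow> Aa - Aa" by (intro tendsto_diff tendsto_const)
  then show ?thesis by (simp add: tau_def[abs_def])
qed

lemma partial_le_Aa: "(\<Sum>n<N. \<bar>acoef n\<bar>) \<le> Aa"
  unfolding Aa_def by (rule sum_le_suminf[OF summable_acoef]) auto

lemma tau_nonneg: "tau N \<ge> 0"
  using partial_le_Aa[of N] by (simp add: tau_def)

lemma Aa_nonneg: "Aa \<ge> 0" using partial_le_Aa[of 0] by simp

lemma tail_le: "N \<le> K \<Longrightarrow> (\<Sum>n\<in>{N..<K}. \<bar>acoef n\<bar>) \<le> tau N"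
proof -
  assume NK: "N \<le> K"
  have "(\<Sum>n\<in>{N..<K}. \<bar>acoef n\<bar>) = (\<Sum>n<K. \<bar>acoef n\<bar>) - (\<Sum>n<N. \<bar>acoef n\<bar>)"
    using sum_diff_nat_ivl[of 0 N K "\<lambda>n. \<bar>acoef n\<bar>"] NK by (simp add: atLeast0LessThan)
  then show ?thesis using partial_le_Aa[of K] by (simp add: tau_def)
qed

lemma Ps_cauchy:
  assumes f: "f \<in> L2m M" and NK: "N \<le> K"
  shows "l2norm M (\<lambda>x. Ps K f x - Ps N f x) \<le> tau N * l2norm M f"
proof -
  have eq: "(\<lambda>x. Ps K f x - Ps N f x) = (\<lambda>x. \<Sum>n\<in>{N..<K}. acoef n *\<^sub>R (S ^^ n) f x)"
  proof
    fix x
    show "Ps K f x - Ps N f x = (\<Sum>n\<in>{N..<K}. acoef n *\<^sub>R (S ^^ n) f x)"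
      unfolding Ps_def using sum_diff_nat_ivl[of 0 N K "\<lambda>n. acoef n *\<^sub>R (S ^^ n) f x"] NK
      by (simp add: atLeast0LessThan)
  qed
  have "l2norm M (\<lambda>x. Ps K f x - Ps N f x) \<le> (\<Sum>n\<in>{N..<K}. \<bar>acoef n\<bar>) * l2norm M f"
    unfolding eq using sum_Sn_norm[OF f, of "{N..<K}" acoef "\<lambda>n. n"] by simp
  also have "\<dots> \<le> tau N * l2norm M f"
    by (rule mult_right_mono[OF tail_le[OF NK] l2norm_nonneg])
  finally show ?thesis .
qed

lemma Ps_bound: "f \<in> L2m M \<Longrightarrow> l2norm M (Ps N f) \<le> Aa * l2norm M f"
proof -
  assume f: "f \<in> L2m M"
  have "l2norm M (Ps N f) \<le> (\<Sum>n<N. \<bar>acoef n\<bar>) * l2norm M f"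
    unfolding Ps_def using sum_Sn_norm[OF f, of "{..<N}" acoef "\<lambda>n. n"] by simp
  also have "\<dots> \<le> Aa * l2norm M f" by (rule mult_right_mono[OF partial_le_Aa l2norm_nonneg])
  finally show ?thesis .
qed

sublocale L: oplim M Ps tau
proof
  show "\<And>N. bounded_linear_op M (Ps N)" by (rule Ps_blo)
  show "tau \<longlonglongrightarrow> 0" by (rule tau_lim)
  show "\<And>N. 0 \<le> tau N" by (rule tau_nonneg)
  show "\<And>f N K. f \<in> L2m M \<Longrightarrow> N \<le> K \<Longrightarrow> l2norm M (\<lambda>x. Ps K f x - Ps N f x) \<le> tau N * l2norm M f"
    by (rule Ps_cauchy)
qed

lemma Ps_lmult:
  assumes f: "f \<in> L2m M"
  shows "aeq M (Ps N (\<lambda>x. X ** f x)) (\<lambda>x. X ** Ps N f x)"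
proof -
  have "aeq M (\<lambda>x. \<Sum>n<N. acoef n *\<^sub>R (S ^^ n) (\<lambda>x. X ** f x) x) (\<lambda>x. \<Sum>n<N. acoef n *\<^sub>R (X ** (S ^^ n) f x))"
    by (rule aeq_sum[OF finite_lessThan]) (rule aeq_scaleR[OF Sn_lmult[OF f]])
  then show ?thesis unfolding Ps_def
    by (rule aeq_eq_trans) (simp add: mult_sum mult_scaleR)
qed

lemma Ps_sym:
  assumes f: "f \<in> L2m M" and g: "g \<in> L2m M"
  shows "sip M (Ps N f) g = sip M f (Ps N g)"
proof -
  have "sip M (Ps N f) g = (\<Sum>n<N. of_real (acoef n) * sip M ((S ^^ n) f) g)"
    unfolding Ps_def using f g by (simp add: sip_sum_left sip_scaleR_left L2m_scaleR SnL)
  also have "\<dots> = (\<Sum>n<N. of_real (acoef n) * sip M f ((S ^^ n) g))"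
    using Sn_sym[OF f g] by simp
  also have "\<dots> = sip M f (Ps N g)"
    unfolding Ps_def using f g by (simp add: sip_sum_right sip_scaleR_right L2m_scaleR SnL)
  finally show ?thesis .
qed

lemma Ps_comm:
  assumes B: "bounded_linear_op M B" and BS: "\<And>f. f \<in> L2m M \<Longrightarrow> aeq M (B (S f)) (S (B f))"
    and f: "f \<in> L2m M"
  shows "aeq M (B (Ps N f)) (Ps N (B f))"
  unfolding Ps_def
proof -
  have "aeq M (B (\<lambda>x. \<Sum>n<N. acoef n *\<^sub>R (S ^^ n) f x)) (\<lambda>x. \<Sum>n<N. acoef n *\<^sub>R B ((S ^^ n) f) x)"
    by (rule blo_lincomb[OF B finite_lessThan]) (rule SnL[OF f])
  also have "aeq M \<dots> (\<lambda>x. \<Sum>n<N. acoef n *\<^sub>R (S ^^ n) (B f) x)"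
    by (rule aeq_sum[OF finite_lessThan]) (rule aeq_scaleR[OF Sn_comm[OF B BS f]])
  finally show "aeq M (B (\<lambda>x. \<Sum>n<N. acoef n *\<^sub>R (S ^^ n) f x)) (\<lambda>x. \<Sum>n<N. acoef n *\<^sub>R (S ^^ n) (B f) x)" .
qed

lemma Ps_pos:
  assumes f: "f \<in> L2m M"
  shows "0 \<le> Re (sip M (Ps N f) f)"
proof -
  have "Re (sip M (Ps N f) f) = (\<Sum>n<N. acoef n * Re (sip M ((S ^^ n) f) f))"
    unfolding Ps_def using f by (simp add: sip_sum_left sip_scaleR_left L2m_scaleR SnL Re_sum)
  also have "\<dots> \<ge> (\<Sum>n<N. acoef n * (l2norm M f)\<^sup>2)"
  proof (rule sum_mono)
    fix n
    show "acoef n * (l2norm M f)\<^sup>2 \<le> acoef n * Re (sip M ((S ^^ n) f) f)"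
    proof (cases "n = 0")
      case True then show ?thesis using Re_sip_self[OF f] by simp
    next
      case False
      have "Re (sip M ((S ^^ n) f) f) \<le> cmod (sip M ((S ^^ n) f) f)" by (rule complex_Re_le_cmod)
      also have "\<dots> \<le> l2norm M ((S ^^ n) f) * l2norm M f" by (rule sip_CS[OF SnL[OF f] f])
      also have "\<dots> \<le> l2norm M f * l2norm M f"
        by (rule mult_right_mono[OF Sn_norm[OF f] l2norm_nonneg])
      finally have "Re (sip M ((S ^^ n) f) f) \<le> (l2norm M f)\<^sup>2" by (simp add: power2_eq_square)
      then show ?thesis using acoef_nonpos[of n] False by (intro mult_left_mono_neg) auto
    qed
  qed
  finally have "(\<Sum>n<N. acoef n) * (l2norm M f)\<^sup>2 \<le> Re (sip M (Ps N f) f)"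
    by (simp add: sum_distrib_right)
  moreover have "0 \<le> (\<Sum>n<N. acoef n) * (l2norm M f)\<^sup>2"
    using acoef_partial_nonneg'[of N] by simp
  ultimately show ?thesis by linarith
qed

end

definition Qset :: "nat \<Rightarrow> (nat \<times> nat) set" where
  "Qset N = ({..<N} \<times> {..<N}) - {(i,j). i + j < N}"

lemma finite_Qset: "finite (Qset N)"
  unfolding Qset_def by auto

lemma double_sum_identity:
  fixes X :: "nat \<Rightarrow> 'v::real_vector"
  assumes N: "N \<ge> 2"
  shows "(\<Sum>n<N. \<Sum>m<N. (acoef n * acoef m) *\<^sub>R X (n+m))
       = X 0 - X 1 + (\<Sum>p\<in>Qset N. (acoef (fst p) * acoef (snd p)) *\<^sub>R X (fst p + snd p))"
proof -
  define g where "g p = (acoef (fst p) * acoef (snd p)) *\<^sub>R X (fst p + snd p)" for p :: "nat \<times> nat"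
  have sq: "(\<Sum>n<N. \<Sum>m<N. (acoef n * acoef m) *\<^sub>R X (n+m)) = (\<Sum>p\<in>{..<N} \<times> {..<N}. g p)"
    by (simp add: sum.cartesian_product g_def split_beta)
  have sub: "{(i,j). i + j < N} \<subseteq> {..<N} \<times> {..<N}" by auto
  have split: "(\<Sum>p\<in>{..<N} \<times> {..<N}. g p) = (\<Sum>p\<in>Qset N. g p) + (\<Sum>p\<in>{(i,j). i + j < N}. g p)"
    unfolding Qset_def by (rule sum.subset_diff[OF sub]) auto
  have tri: "(\<Sum>p\<in>{(i,j). i + j < N}. g p) = (\<Sum>k<N. \<Sum>i\<le>k. g (i, k - i))"
    using sum.triangle_reindex[of "\<lambda>i j. g (i, j)" N] by (simp add: split_beta)
  have inner: "(\<Sum>i\<le>k. g (i, k - i)) = (if k = 0 then 1 else if k = 1 then -1 else 0) *\<^sub>R X k" for k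
  proof -
    have "(\<Sum>i\<le>k. g (i, k - i)) = (\<Sum>i\<le>k. (acoef i * acoef (k - i)) *\<^sub>R X k)"
      by (rule sum.cong) (auto simp: g_def)
    also have "\<dots> = (\<Sum>i=0..k. acoef i * acoef (k - i)) *\<^sub>R X k"
      by (simp add: scaleR_sum_left atLeast0AtMost)
    also have "\<dots> = (if k = 0 then 1 else if k = 1 then -1 else 0) *\<^sub>R X k"
      by (simp only: acoef_cauchy)
    finally show ?thesis .
  qed
  have "(\<Sum>k<N. (if k = 0 then 1 else if k = 1 then -1 else 0) *\<^sub>R X k)
      = (\<Sum>k\<in>{0,1}. (if k = 0 then 1 else if k = 1 then -1 else 0) *\<^sub>R X k)"
    using N by (intro sum.mono_neutral_right) auto
  also have "\<dots> = X 0 - X 1" by simp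
  finally have "(\<Sum>p\<in>{(i,j). i + j < N}. g p) = X 0 - X 1" using tri inner by simp
  then show ?thesis using sq split by (simp add: g_def)
qed

lemma Qset_sub: "Qset N \<subseteq> ({..<N} \<times> {..<N}) - ({..<N div 2} \<times> {..<N div 2})"
  unfolding Qset_def by auto

context sqsetup begin

lemma Q_bound:
  "(\<Sum>p\<in>Qset N. \<bar>acoef (fst p) * acoef (snd p)\<bar>) \<le> 2 * Aa * tau (N div 2)"
proof -
  define h where "h = N div 2"
  define sN where "sN = (\<Sum>n<N. \<bar>acoef n\<bar>)"
  define sh where "sh = (\<Sum>n<h. \<bar>acoef n\<bar>)"
  have hN: "h \<le> N" by (simp add: h_def)
  have sub2: "{..<h} \<times> {..<h} \<subseteq> {..<N} \<times> {..<N}" using hN by auto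
  have prod: "(\<Sum>p\<in>{..<K} \<times> {..<K}. \<bar>acoef (fst p) * acoef (snd p)\<bar>) = (\<Sum>n<K. \<bar>acoef n\<bar>) * (\<Sum>n<K. \<bar>acoef n\<bar>)" for K
    by (simp add: sum_product sum.cartesian_product split_beta abs_mult)
  have "(\<Sum>p\<in>Qset N. \<bar>acoef (fst p) * acoef (snd p)\<bar>)
      \<le> (\<Sum>p\<in>({..<N} \<times> {..<N}) - ({..<h} \<times> {..<h}). \<bar>acoef (fst p) * acoef (snd p)\<bar>)"
    using Qset_sub[of N] by (intro sum_mono2) (auto simp: h_def)
  also have "\<dots> = sN * sN - sh * sh"
    using sum_diff[OF _ sub2, of "\<lambda>p. \<bar>acoef (fst p) * acoef (snd p)\<bar>"] prod[of N] prod[of h]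
    by (simp add: sN_def sh_def)
  also have "\<dots> = (sN - sh) * (sN + sh)" by (simp add: algebra_simps)
  also have "\<dots> \<le> tau h * (2 * Aa)"
  proof (rule mult_mono)
    have "sN - sh = (\<Sum>n\<in>{h..<N}. \<bar>acoef n\<bar>)"
      using sum_diff_nat_ivl[of 0 h N "\<lambda>n. \<bar>acoef n\<bar>"] hN by (simp add: atLeast0LessThan sN_def sh_def)
    then show "sN - sh \<le> tau h" using tail_le[OF hN] by simp
    show "sN + sh \<le> 2 * Aa" using partial_le_Aa[of N] partial_le_Aa[of h] by (simp add: sN_def sh_def)
    show "0 \<le> tau h" by (rule tau_nonneg)
    show "0 \<le> sN + sh" by (simp add: sN_def sh_def sum_nonneg add_nonneg_nonneg)
  qed
  finally show ?thesis by (simp add: h_def algebra_simps)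
qed

lemma tau_half_lim: "(\<lambda>N. tau (N div 2)) \<longlonglongrightarrow> 0"
proof (rule LIMSEQ_I)
  fix e :: real assume e: "e > 0"
  obtain N0 where N0: "\<And>n. n \<ge> N0 \<Longrightarrow> norm (tau n - 0) < e"
    using LIMSEQ_D[OF tau_lim e] by metis
  have "\<forall>n\<ge>2 * N0. norm (tau (n div 2) - 0) < e"
  proof (intro allI impI)
    fix n assume "n \<ge> 2 * N0"
    then have "n div 2 \<ge> N0" by linarith
    then show "norm (tau (n div 2) - 0) < e" by (rule N0)
  qed
  then show "\<exists>no. \<forall>n\<ge>no. norm (tau (n div 2) - 0) < e" by blast
qed

lemma Sn_add: "(S ^^ n) ((S ^^ m) f) = (S ^^ (n+m)) f"
  by (metis comp_apply funpow_add)

lemma Ps_Ps: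
  assumes f: "f \<in> L2m M"
  shows "aeq M (Ps N (Ps N f)) (\<lambda>x. \<Sum>n<N. \<Sum>m<N. (acoef n * acoef m) *\<^sub>R (S ^^ (n+m)) f x)"
proof -
  have a: "aeq M ((S ^^ n) (Ps N f)) (\<lambda>x. \<Sum>m<N. acoef m *\<^sub>R (S ^^ n) ((S ^^ m) f) x)" for n
    unfolding Ps_def by (rule blo_lincomb[OF Sn_blo finite_lessThan]) (rule SnL[OF f])
  have "aeq M (\<lambda>x. \<Sum>n<N. acoef n *\<^sub>R (S ^^ n) (Ps N f) x)
      (\<lambda>x. \<Sum>n<N. acoef n *\<^sub>R (\<Sum>m<N. acoef m *\<^sub>R (S ^^ n) ((S ^^ m) f) x))"
    by (rule aeq_sum[OF finite_lessThan]) (rule aeq_scaleR[OF a])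
  then have "aeq M (Ps N (Ps N f))
      (\<lambda>x. \<Sum>n<N. acoef n *\<^sub>R (\<Sum>m<N. acoef m *\<^sub>R (S ^^ n) ((S ^^ m) f) x))"
    unfolding Ps_def[of N "Ps N f"] .
  then show ?thesis
    by (rule aeq_eq_trans) (simp add: scaleR_sum_right Sn_add)
qed

lemma W0_sq:
  assumes f: "f \<in> L2m M"
  shows "aeq M (L.W (L.W f)) (\<lambda>x. f x - S f x)"
proof -
  define W where "W = L.W"
  have Wf: "W f \<in> L2m M" unfolding W_def by (rule L.WL[OF f])
  have WWf: "W (W f) \<in> L2m M" unfolding W_def by (rule L.WL[OF Wf[unfolded W_def]])
  have fSf: "(\<lambda>x. f x - S f x) \<in> L2m M" by (rule L2m_diff[OF f SL[OF f]])
  define D where "D N = (\<lambda>x. \<Sum>n<N. \<Sum>m<N. (acoef n * acoef m) *\<^sub>R (S ^^ (n+m)) f x)" for N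
  define R where "R N = (\<lambda>x. \<Sum>p\<in>Qset N. (acoef (fst p) * acoef (snd p)) *\<^sub>R (S ^^ (fst p + snd p)) f x)" for N
  have RL: "R N \<in> L2m M" for N unfolding R_def by (intro L2m_sum L2m_scaleR SnL f)
  have DR: "(\<lambda>x. D N x - (f x - S f x)) = R N" if N: "N \<ge> 2" for N
  proof
    fix x
    show "D N x - (f x - S f x) = R N x"
      unfolding D_def R_def using double_sum_identity[OF N, of "\<lambda>k. (S ^^ k) f x"] by simp
  qed
  define g where "g N = tau N * l2norm M (W f) + Aa * (tau N * l2norm M f) + 2 * Aa * tau (N div 2) * l2norm M f" for N
  have glim: "g \<longlonglongrightarrow> 0"
  proof -
    have "(\<lambda>N. tau N * l2norm M (W f) + Aa * (tau N * l2norm M f) + 2 * Aa * tau (N div 2) * l2norm M f)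
        \<longlonglongrightarrow> 0 * l2norm M (W f) + Aa * (0 * l2norm M f) + 2 * Aa * 0 * l2norm M f"
      by (intro tendsto_intros tau_lim tau_half_lim)
    then show ?thesis by (simp add: g_def[abs_def])
  qed
  have bound: "l2norm M (\<lambda>x. W (W f) x - (f x - S f x)) \<le> g N" if N: "N \<ge> 2" for N
  proof -
    have PWf: "Ps N (W f) \<in> L2m M" by (rule PsL[OF Wf])
    have PPf: "Ps N (Ps N f) \<in> L2m M" by (rule PsL[OF PsL[OF f]])
    have "l2norm M (\<lambda>x. W (W f) x - (f x - S f x))
        \<le> l2norm M (\<lambda>x. W (W f) x - Ps N (W f) x) + l2norm M (\<lambda>x. Ps N (W f) x - Ps N (Ps N f) x)
         + l2norm M (\<lambda>x. Ps N (Ps N f) x - (f x - S f x))"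
      by (rule l2norm_tri3[OF WWf PWf PPf fSf])
    also have "l2norm M (\<lambda>x. W (W f) x - Ps N (W f) x) \<le> tau N * l2norm M (W f)"
      unfolding W_def by (rule L.W_approx[OF Wf[unfolded W_def]])
    also have "l2norm M (\<lambda>x. Ps N (W f) x - Ps N (Ps N f) x) \<le> Aa * (tau N * l2norm M f)"
    proof -
      have d: "(\<lambda>x. W f x - Ps N f x) \<in> L2m M" by (rule L2m_diff[OF Wf PsL[OF f]])
      have "l2norm M (\<lambda>x. Ps N (W f) x - Ps N (Ps N f) x) = l2norm M (Ps N (\<lambda>x. W f x - Ps N f x))"
        by (rule l2norm_cong[OF L2m_diff[OF PWf PPf] PsL[OF d] aeq_sym[OF blo_diff[OF Ps_blo Wf PsL[OF f]]]])
      also have "\<dots> \<le> Aa * l2norm M (\<lambda>x. W f x - Ps N f x)" by (rule Ps_bound[OF d])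
      also have "\<dots> \<le> Aa * (tau N * l2norm M f)"
        unfolding W_def by (rule mult_left_mono[OF L.W_approx[OF f] Aa_nonneg])
      finally show ?thesis .
    qed
    also have "l2norm M (\<lambda>x. Ps N (Ps N f) x - (f x - S f x)) \<le> 2 * Aa * tau (N div 2) * l2norm M f"
    proof -
      have DL: "D N \<in> L2m M" unfolding D_def by (intro L2m_sum L2m_scaleR SnL f)
      have "l2norm M (\<lambda>x. Ps N (Ps N f) x - (f x - S f x)) = l2norm M (\<lambda>x. D N x - (f x - S f x))"
        by (rule l2norm_cong[OF L2m_diff[OF PPf fSf] L2m_diff[OF DL fSf]
              aeq_diff[OF Ps_Ps[OF f, unfolded D_def[symmetric]] aeq_refl]])
      also have "\<dots> = l2norm M (R N)" using DR[OF N] by simp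
      also have "\<dots> \<le> (\<Sum>p\<in>Qset N. \<bar>acoef (fst p) * acoef (snd p)\<bar>) * l2norm M f"
        unfolding R_def by (rule sum_Sn_norm[OF f finite_Qset])
      also have "\<dots> \<le> 2 * Aa * tau (N div 2) * l2norm M f"
        by (rule mult_right_mono[OF Q_bound l2norm_nonneg])
      finally show ?thesis .
    qed
    finally show ?thesis by (simp add: g_def)
  qed
  have "l2norm M (\<lambda>x. W (W f) x - (f x - S f x)) \<le> 0"
    by (rule le_lim_zero_ev[OF glim bound])
  then show ?thesis using norm0_aeq[OF WWf fSf] by (simp add: W_def)
qed

end

lemma pos_zero_form:
  fixes U :: "('a \<Rightarrow> complex^'r::finite^'s::finite) \<Rightarrow> ('a \<Rightarrow> complex^'r^'s)"
  assumes P: "positive_op M U" and h: "h \<in> L2m M" and z: "Re (sip M (U h) h) = 0"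
  shows "aeq M (U h) (\<lambda>x. 0)"
proof -
  have Uh: "U h \<in> L2m M" by (rule blo_L2[OF pos_blo[OF P] h])
  have "(cmod (sip M (U h) (U h)))\<^sup>2 \<le> Re (sip M (U h) h) * Re (sip M (U (U h)) (U h))"
    by (rule pos_formCS[OF P h Uh])
  then have "cmod (sip M (U h) (U h)) = 0" using z by simp
  then have "(l2norm M (U h))\<^sup>2 = 0" using sip_self[OF Uh] by (simp del: of_real_power)
  then show ?thesis using l2norm_zero_iff[OF Uh] by simp
qed

context sqsetup begin

definition Wt where "Wt = (\<lambda>f x. sqrt CT *\<^sub>R L.W f x)"

lemma Wt_blo: "bounded_linear_op M Wt"
  unfolding Wt_def by (rule blo_scaleRop[OF L.W_blo])

lemma WtL: "f \<in> L2m M \<Longrightarrow> Wt f \<in> L2m M" by (rule blo_L2[OF Wt_blo])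

lemma W0_sym: "f \<in> L2m M \<Longrightarrow> g \<in> L2m M \<Longrightarrow> sip M (L.W f) g = sip M f (L.W g)"
  by (rule L.W_sym[OF Ps_sym])

lemma W0_pos: "f \<in> L2m M \<Longrightarrow> 0 \<le> Re (sip M (L.W f) f)"
  by (rule L.W_pos[OF Ps_pos])

lemma W0_lmult: "f \<in> L2m M \<Longrightarrow> aeq M (L.W (\<lambda>x. X ** f x)) (\<lambda>x. X ** L.W f x)"
  by (rule L.W_lmult[OF Ps_lmult])

lemma Wt_sym:
  assumes f: "f \<in> L2m M" and g: "g \<in> L2m M"
  shows "sip M (Wt f) g = sip M f (Wt g)"
  unfolding Wt_def using f g L.WL[OF f] L.WL[OF g] W0_sym[OF f g]
  by (simp add: sip_scaleR_left sip_scaleR_right)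

lemma Wt_im_re:
  assumes f: "f \<in> L2m M"
  shows "Im (sip M (Wt f) f) = 0 \<and> 0 \<le> Re (sip M (Wt f) f)"
proof -
  have e: "sip M (Wt f) f = of_real (sqrt CT) * sip M (L.W f) f"
    unfolding Wt_def using f L.WL[OF f] by (simp add: sip_scaleR_left)
  have "sip M (L.W f) f = cnj (sip M (L.W f) f)"
    using W0_sym[OF f f] sip_commute[OF f L.WL[OF f]] by simp
  then have im: "Im (sip M (L.W f) f) = 0" by (simp add: complex_eq_iff)
  show ?thesis
    using e im W0_pos[OF f] CT_pos by (simp add: mult_nonneg_nonneg)
qed

lemma Wt_pos_op: "positive_op M Wt"
  unfolding positive_op_def using Wt_blo Wt_sym Wt_im_re by blast

lemma Wt_sq:
  assumes f: "f \<in> L2m M"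
  shows "aeq M (Wt (Wt f)) (T f)"
proof -
  have Wf: "L.W f \<in> L2m M" by (rule L.WL[OF f])
  have "aeq M (Wt (Wt f)) (\<lambda>x. sqrt CT *\<^sub>R (sqrt CT *\<^sub>R L.W (L.W f) x))"
    unfolding Wt_def by (rule aeq_scaleR[OF blo_scaleR[OF L.W_blo Wf]])
  also have "aeq M \<dots> (\<lambda>x. sqrt CT *\<^sub>R (sqrt CT *\<^sub>R (f x - S f x)))"
    by (rule aeq_scaleR[OF aeq_scaleR[OF W0_sq[OF f]]])
  finally show ?thesis
    by (rule aeq_eq_trans) (use CT_pos in \<open>simp add: S_def\<close>)
qed

lemma Wt_lmult:
  assumes f: "f \<in> L2m M"
  shows "aeq M (Wt (\<lambda>x. X ** f x)) (\<lambda>x. X ** Wt f x)"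
  unfolding Wt_def
  by (rule aeq_eq_trans[OF aeq_scaleR[OF W0_lmult[OF f]]]) (simp add: mult_scaleR)

lemma Wt_comm:
  assumes B: "bounded_linear_op M B" and BS: "\<And>f. f \<in> L2m M \<Longrightarrow> aeq M (B (S f)) (S (B f))"
    and f: "f \<in> L2m M"
  shows "aeq M (B (Wt f)) (Wt (B f))"
proof -
  have "aeq M (B (Wt f)) (\<lambda>x. sqrt CT *\<^sub>R B (L.W f) x)"
    unfolding Wt_def by (rule blo_scaleR[OF B L.WL[OF f]])
  also have "aeq M \<dots> (Wt (B f))"
    unfolding Wt_def by (rule aeq_scaleR[OF L.W_comm[OF B Ps_comm[OF B BS] f]])
  finally show ?thesis .
qed

definition Wc where "Wc = op_sqrt M T"

lemma Wc_spec: "positive_op M Wc \<and> (\<forall>f\<in>L2m M. aeq M (Wc (Wc f)) (T f))"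
  unfolding Wc_def op_sqrt_def
  by (rule someI[of _ Wt]) (use Wt_pos_op Wt_sq in blast)

lemma Wc_pos: "positive_op M Wc" using Wc_spec by blast
lemma Wc_blo: "bounded_linear_op M Wc" by (rule pos_blo[OF Wc_pos])
lemma WcL: "f \<in> L2m M \<Longrightarrow> Wc f \<in> L2m M" by (rule blo_L2[OF Wc_blo])
lemma Wc_sq: "f \<in> L2m M \<Longrightarrow> aeq M (Wc (Wc f)) (T f)" using Wc_spec by blast

lemma Wc_T:
  assumes f: "f \<in> L2m M"
  shows "aeq M (Wc (T f)) (T (Wc f))"
proof -
  have "aeq M (Wc (T f)) (Wc (Wc (Wc f)))"
    by (rule blo_cong[OF Wc_blo TL[OF f] WcL[OF WcL[OF f]] aeq_sym[OF Wc_sq[OF f]]])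
  also have "aeq M \<dots> (T (Wc f))" by (rule Wc_sq[OF WcL[OF f]])
  finally show ?thesis .
qed

lemma Wc_S:
  assumes f: "f \<in> L2m M"
  shows "aeq M (Wc (S f)) (S (Wc f))"
proof -
  have Tf: "T f \<in> L2m M" by (rule TL[OF f])
  have cTf: "(\<lambda>x. (1/CT) *\<^sub>R T f x) \<in> L2m M" by (rule L2m_scaleR[OF Tf])
  have "aeq M (Wc (S f)) (\<lambda>x. Wc f x - Wc (\<lambda>x. (1/CT) *\<^sub>R T f x) x)"
    unfolding S_def by (rule blo_diff[OF Wc_blo f cTf])
  also have "aeq M \<dots> (\<lambda>x. Wc f x - (1/CT) *\<^sub>R Wc (T f) x)"
    by (rule aeq_diff[OF aeq_refl blo_scaleR[OF Wc_blo Tf]])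
  also have "aeq M \<dots> (\<lambda>x. Wc f x - (1/CT) *\<^sub>R T (Wc f) x)"
    by (rule aeq_diff[OF aeq_refl aeq_scaleR[OF Wc_T[OF f]]])
  finally show ?thesis by (simp add: S_def)
qed

lemma Wc_Wt: "f \<in> L2m M \<Longrightarrow> aeq M (Wc (Wt f)) (Wt (Wc f))"
  by (rule Wt_comm[OF Wc_blo Wc_S])

lemma Wc_eq_Wt:
  assumes f: "f \<in> L2m M"
  shows "aeq M (Wc f) (Wt f)"
proof -
  define h where "h = (\<lambda>x. Wc f x - Wt f x)"
  have Wcf: "Wc f \<in> L2m M" by (rule WcL[OF f])
  have Wtf: "Wt f \<in> L2m M" by (rule WtL[OF f])
  have h: "h \<in> L2m M" unfolding h_def by (rule L2m_diff[OF Wcf Wtf])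
  have Wch: "Wc h \<in> L2m M" by (rule WcL[OF h])
  have Wth: "Wt h \<in> L2m M" by (rule WtL[OF h])
  have a: "aeq M (Wc h) (\<lambda>x. Wc (Wc f) x - Wc (Wt f) x)"
    unfolding h_def by (rule blo_diff[OF Wc_blo Wcf Wtf])
  have b: "aeq M (Wt h) (\<lambda>x. Wt (Wc f) x - Wt (Wt f) x)"
    unfolding h_def by (rule blo_diff[OF Wt_blo Wcf Wtf])
  have "aeq M (\<lambda>x. Wc h x + Wt h x)
      (\<lambda>x. (Wc (Wc f) x - Wc (Wt f) x) + (Wt (Wc f) x - Wt (Wt f) x))"
    by (rule aeq_add[OF a b])
  also have "aeq M \<dots> (\<lambda>x. (T f x - Wt (Wc f) x) + (Wt (Wc f) x - T f x))"
    by (rule aeq_add[OF aeq_diff[OF Wc_sq[OF f] Wc_Wt[OF f]] aeq_diff[OF aeq_refl Wt_sq[OF f]]])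
  finally have c: "aeq M (\<lambda>x. Wc h x + Wt h x) (\<lambda>x. 0)"
    by (rule aeq_eq_trans) simp
  have "sip M (\<lambda>x. Wc h x + Wt h x) h = sip M (\<lambda>x. 0) h"
    by (rule sip_cong[OF L2m_add[OF Wch Wth] h L2m_zero h c aeq_refl])
  then have s0: "sip M (Wc h) h + sip M (Wt h) h = 0"
    using sip_add_left[OF Wch Wth h] sip_zero_left[OF h] by simp
  then have "Re (sip M (Wc h) h) + Re (sip M (Wt h) h) = 0"
    by (simp add: complex_eq_iff)
  moreover have "Re (sip M (Wc h) h) \<ge> 0" by (rule pos_re[OF Wc_pos h])
  moreover have "Re (sip M (Wt h) h) \<ge> 0" by (rule pos_re[OF Wt_pos_op h])
  ultimately have z1: "Re (sip M (Wc h) h) = 0" and z2: "Re (sip M (Wt h) h) = 0" by linarith+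
  have Wc0: "aeq M (Wc h) (\<lambda>x. 0)" by (rule pos_zero_form[OF Wc_pos h z1])
  have Wt0: "aeq M (Wt h) (\<lambda>x. 0)" by (rule pos_zero_form[OF Wt_pos_op h z2])
  have "sip M h h = sip M (Wc f) h - sip M (Wt f) h"
    unfolding h_def by (rule sip_diff_left[OF Wcf Wtf h[unfolded h_def]])
  also have "\<dots> = sip M f (Wc h) - sip M f (Wt h)"
    using pos_sym[OF Wc_pos f h] pos_sym[OF Wt_pos_op f h] by simp
  also have "\<dots> = sip M f (\<lambda>x. 0) - sip M f (\<lambda>x. 0)"
    using sip_cong[OF f Wch f L2m_zero aeq_refl Wc0] sip_cong[OF f Wth f L2m_zero aeq_refl Wt0] by simp
  finally have "sip M h h = 0" by simp
  then have "(l2norm M h)\<^sup>2 = 0" using sip_self[OF h] by simp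
  then show ?thesis using aeq_iff_norm[OF Wcf Wtf] by (simp add: h_def)
qed

lemma Wc_lmult:
  assumes f: "f \<in> L2m M"
  shows "aeq M (Wc (\<lambda>x. X ** f x)) (\<lambda>x. X ** Wc f x)"
proof -
  have "aeq M (Wc (\<lambda>x. X ** f x)) (Wt (\<lambda>x. X ** f x))" by (rule Wc_eq_Wt[OF L2m_lmult[OF f]])
  also have "aeq M \<dots> (\<lambda>x. X ** Wt f x)" by (rule Wt_lmult[OF f])
  also have "aeq M \<dots> (\<lambda>x. X ** Wc f x)" by (rule aeq_lmult[OF aeq_sym[OF Wc_eq_Wt[OF f]]])
  finally show ?thesis .
qed

lemma Wc_adj: "adjointable_op M Wc"
  unfolding adjointable_op_def
proof (intro exI[of _ Wc] conjI Wc_blo ballI)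
  fix f g :: "'a \<Rightarrow> complex^'r^'s" assume f: "f \<in> L2m M" and g: "g \<in> L2m M"
  show "mip M (Wc f) g = mip M f (Wc g)"
  proof (rule mat_eq_trace)
    fix Y :: "complex^'s^'s"
    have "mtrace (Y ** mip M (Wc f) g) = sip M (\<lambda>x. Y ** Wc f x) g"
      by (rule sip_lmult[OF WcL[OF f] g, symmetric])
    also have "\<dots> = sip M (Wc (\<lambda>x. Y ** f x)) g"
      by (rule sip_cong[OF L2m_lmult[OF WcL[OF f]] g WcL[OF L2m_lmult[OF f]] g
            aeq_sym[OF Wc_lmult[OF f]] aeq_refl])
    also have "\<dots> = sip M (\<lambda>x. Y ** f x) (Wc g)" by (rule pos_sym[OF Wc_pos L2m_lmult[OF f] g])
    also have "\<dots> = mtrace (Y ** mip M f (Wc g))" by (rule sip_lmult[OF f WcL[OF g]])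
    finally show "mtrace (Y ** mip M (Wc f) g) = mtrace (Y ** mip M f (Wc g))" .
  qed
qed

lemma Wc_bij:
  assumes Tb: "bij_op M T"
  shows "bij_op M Wc"
  unfolding bij_op_def
proof (intro conjI ballI impI)
  fix f g :: "'a \<Rightarrow> complex^'r^'s" assume f: "f \<in> L2m M" and g: "g \<in> L2m M"
    and e: "aeq M (Wc f) (Wc g)"
  have "aeq M (T f) (Wc (Wc f))" by (rule aeq_sym[OF Wc_sq[OF f]])
  also have "aeq M \<dots> (Wc (Wc g))" by (rule blo_cong[OF Wc_blo WcL[OF f] WcL[OF g] e])
  also have "aeq M \<dots> (T g)" by (rule Wc_sq[OF g])
  finally have "aeq M (T f) (T g)" .
  then show "aeq M f g" using Tb f g unfolding bij_op_def by blast
next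
  fix g :: "'a \<Rightarrow> complex^'r^'s" assume g: "g \<in> L2m M"
  obtain f' where f': "f' \<in> L2m M" "aeq M (T f') g" using Tb g unfolding bij_op_def by blast
  have "aeq M (Wc (Wc f')) g" by (rule aeq_trans[OF Wc_sq[OF f'(1)] f'(2)])
  then show "\<exists>f\<in>L2m M. aeq M (Wc f) g" using WcL[OF f'(1)] by blast
qed

end

theorem theorem3p6:
  fixes M :: "'g::{metric_space, topological_ab_group_add} measure"
    and T :: "('g \<Rightarrow> complex^'r::finite^'s::finite) \<Rightarrow> ('g \<Rightarrow> complex^'r^'s)"
    and E :: "nat \<Rightarrow> ('g \<Rightarrow> complex^'r^'s)"
  assumes "lca_metr_sigma_compact TYPE('g)"
    and "haar_measure M"
    and "bounded_linear_op M T" and "bij_op M T" and "adjointable_op M T"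
    and "matrix_onb M E"
    and "positive_op M T"
  shows "matrix_riesz_basis M (\<lambda>k. T (E k)) \<longleftrightarrow>
         matrix_riesz_basis M (\<lambda>k. op_sqrt M T (E k))"
proof -
  interpret sqsetup M T using assms(7) assms(5) by unfold_locales
  have lhs: "matrix_riesz_basis M (\<lambda>k. T (E k))"
    unfolding matrix_riesz_basis_def
    by (intro exI[of _ E] exI[of _ T] conjI allI) (use assms in \<open>auto simp: aeq_refl\<close>)
  have rhs: "matrix_riesz_basis M (\<lambda>k. op_sqrt M T (E k))"
    unfolding matrix_riesz_basis_def
  proof (intro exI[of _ E] exI[of _ Wc] conjI allI)
    show "matrix_onb M E" by (rule assms(6))
    show "bounded_linear_op M Wc" by (rule Wc_blo)
    show "bij_op M Wc" by (rule Wc_bij[OF assms(4)])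
    show "adjointable_op M Wc" by (rule Wc_adj)
    fix k show "aeq M (op_sqrt M T (E k)) (Wc (E k))" by (simp add: Wc_def aeq_refl)
  qed
  show ?thesis using lhs rhs by blast
qed

end
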